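(* Let $G$, $\Sigma_o$, a supervisor $S$ realized by $H$, secret initial states $X_{sec}\subseteq X_0$ and vulnerable events $\Sigma_v\subseteq\Sigma_o$ be given, and let $M^s$ be the simplified All Attack Structure. There exists an IS-detectable attacker (i.e., $S/G$ is IS-attackable) if and only if there exists a single attack structure $m$ of $M^s$ whose induced strategy $A_m$ is IS-detectable.
   Context: A plant is a finite automaton $G=(X,\Sigma,\delta,X_0)$ with partial transition function $\delta$ (extended to strings), initial states $X_0\subseteq X$; $\mathcal{L}(G,x_0)=\{s:\delta(x_0,s)\text{ defined}\}$, $\mathcal{L}(G)=\bigcup_{x_0\in X_0}\mathcal{L}(G,x_0)$. $\Sigma=\Sigma_o\dot\cup\Sigma_{uo}=\Sigma_c\dot\cup\Sigma_{uc}$, $P:\Sigma^*\to\Sigma_o^*$ the natural projection. A supervisor is $S:P(\mathcal{L}(G))\to\Gamma=\{\gamma\subseteq\Sigma:\Sigma_{uc}\subseteq\gamma\}$, realized by a deterministic automaton $H=(Z,\Sigma,\xi,z_0)$ with $\xi(z,\sigma)\neq z\Rightarrow\sigma\in\Sigma_o$ and $\Delta_H(\xi(z_0,s))=S(P(s))$ for $s\in\mathcal{L}(S/G)$ ($\Delta_H(z)$ = events defined at $z$). For any map $T$ from observable strings to subsets of $\Sigma$, $\mathcal{L}(T/G,x_0)$ is defined by $\epsilon\in\mathcal{L}(T/G,x_0)$ and $s\sigma\in\mathcal{L}(T/G,x_0)$ iff $s\in\mathcal{L}(T/G,x_0)$, $s\sigma\in\mathcal{L}(G,x_0)$, $\sigma\in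 T(P(s))$; $\mathcal{L}(T/G)=\bigcup_{x_0}\mathcal{L}(T/G,x_0)$. Estimates: $\mathcal{E}^C_{T/G}(\alpha)=\{\delta(x_0,s):x_0\in X_0,s\in\mathcal{L}(T/G,x_0),P(s)=\alpha\}$, $\mathcal{E}^I_{T/G}(\alpha)=\{x_0\in X_0:\exists s\in\mathcal{L}(T/G,x_0),P(s)=\alpha\}$. An attacker is a map $A:P(\mathcal{L}(G))\to\Sigma_o\cup\{\epsilon\}$ with $A(\epsilon)=\epsilon$ and, for $\alpha\sigma\in P(\mathcal{L}(G))$, $A(\alpha\sigma)=\sigma$ if $\sigma\notin\Sigma_v$, $A(\alpha\sigma)\in\Sigma_v\cup\{\epsilon\}$ if $\sigma\in\Sigma_v$. It induces $g_A(\epsilon)=\epsilon$, $g_A(\alpha\sigma)=g_A(\alpha)A(\alpha\sigma)$ and $S_A=S\circ g_A$. $A$ is stealthy along $\alpha\in P(\mathcal{L}(S_A/G))$ if $\mathcal{E}^C_{S/G}(g_A(\alpha))\neq\emptyset$. $A$ is IS-detectable if there exist $\alpha\in\Sigma_o^*$, $\sigma\in\Sigma_o$ with $\alpha\sigma\in P(\mathcal{L}(S_A/G))$ such that $A$ is stealthy along $\alpha$ and $\mathcal{E}^I_{S_A/G}(\alpha\sigma)\subseteq X_{sec}$. Operators: for $q\subseteq X$, $\gamma\subseteq\Sigma$, $\sigma\in\Sigma_o$: $\textsf{UR}_\gamma(q)=\{\delta(x,s):x\in q,s\in(\Sigma_{uo}\cap\gamma)^*\}$, $\textsf{NX}_\sigma(q)=\{\delta(x,\sigma):x\in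 q\}$, $\textsf{NX}_\epsilon(q)=q$, $\mathcal{O}(q,\gamma)=\{\sigma\in\Sigma_o\cap\gamma:\exists x\in q,\exists w\in(\Sigma_{uo}\cap\gamma)^*,\delta(x,w\sigma)\text{ defined}\}$. Augmented system: states $\tilde X\subseteq X_0\times X$, $\tilde X_0=\{(x_0,x_0)\}$, $\tilde\delta((x_0,x),\sigma)=(x_0,\delta(x,\sigma))$; $\widetilde{\textsf{UR}},\widetilde{\textsf{NX}},\mathcal{O}(\tilde q,\gamma)$ defined analogously; $I(\tilde q)=\{x_0:(x_0,x)\in\tilde q\text{ for some }x\}$. All Attack Structure (AAS): for $\sigma\in\Sigma_o$, $\hat\sigma$ is a doctored copy, $\hat\epsilon$ an erasure symbol; $\mathcal{V}(\sigma)=\{\hat\sigma':\sigma'\in\Sigma_v\}\cup\{\hat\epsilon\}$ if $\sigma\in\Sigma_v$, else $\{\hat\sigma\}$. $M=(Q,\Sigma_M,f,q_0)$, $\Sigma_M=\Sigma_o\cup\{\hat\sigma:\sigma\in\Sigma_o\}\cup\{\hat\epsilon\}$, $q_0=(X_0,\tilde X_0,z_0)$, states reachable from $q_0$, $Q=Q_e\dot\cup Q_a$: environment states $(q,\tilde q,z)$ with $q\subseteq X,\tilde q\subseteq\tilde X,z\in Z\cup\{z_{\textsf{att}}\}$ ($z_{\textsf{att}}$ new, $\Delta_H(z_{\textsf{att}})=\emptyset$); attack states $(q,\tilde q,z,\sigma)$. At $(q,\tilde q,z)$ enabled events are $\mathcal{O}(\tilde q,\Delta_H(z))$ if $z\in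 Z$, none if $z=z_{\textsf{att}}$, with $f((q,\tilde q,z),\sigma)=(q,\tilde q,z,\sigma)$. At $(q,\tilde q,z,\sigma)$ enabled events are $\mathcal{V}(\sigma)$, with $f((q,\tilde q,z,\sigma),\hat\sigma_a)=(q',\tilde q',z')$, $q'=\textsf{NX}_{\sigma_a}(\textsf{UR}_{\Delta_H(z)}(q))$, $\tilde q'=\widetilde{\textsf{NX}}_\sigma(\widetilde{\textsf{UR}}_{\Delta_H(z)}(\tilde q))$, $z'=\xi(z,\sigma_a)$ if $q'\ne\emptyset$ (with $\xi(z,\epsilon)=z$), $z'=z_{\textsf{att}}$ otherwise. Extended strings are those leading from $q_0$ to an environment state; for $h=\sigma_1\hat\sigma_{a1}\cdots\sigma_n\hat\sigma_{an}$, $\textsf{obs}(h)=\sigma_1\cdots\sigma_n$. Environment state $(q,\tilde q,z)$ is positive detected if $I(\tilde q)\subseteq X_{sec}$, negative detected if $I(\tilde q)\cap X_{sec}=\emptyset$ (together: $Q_{det}$); it is undetectable (set $Q_{ud}$) if $I(\tilde q)\cap X_{sec}\neq\emptyset$ and for every $(x_0,x)\in\widetilde{\textsf{UR}}_{\Delta_H(z)}(\tilde q)$ with $x_0\in X_{sec}$ there exists $(x_0',x)\in\widetilde{\textsf{UR}}_{\Delta_H(z)}(\tilde q)$ with $x_0'\notin X_{sec}$. The simplified AAS $M^s$ is the part of $M$ reachable from $q_0$ after removing all outgoing transitions from states in $Q_{det}\cup Q_{ud}$. A single attack structure (SAS) of $M^s$ is a sub-automaton $m$ of $M^s$ (states reachable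 from $q_0$, transitions a subset of those of $M^s$) such that every attack state of $m$ has exactly one enabled event in $m$, and every environment state of $m$ has in $m$ all the enabled events it has in $M^s$. For an observation $\alpha$, $\textsf{obs}^{-1}_m(\alpha)$ denotes the (at most one) extended string $h$ of $m$ with $\textsf{obs}(h)=\alpha$. The induced strategy $A_m$ is: $A_m(\epsilon)=\epsilon$; for nonempty $\alpha\in P(\mathcal{L}(G))$, if $\textsf{obs}^{-1}_m(\alpha)$ exists and its last event is $\hat\sigma_a$ then $A_m(\alpha)=\sigma_a$ (with $\sigma_a=\epsilon$ for $\hat\epsilon$); otherwise $A_m(\alpha)$ is the last event of $\alpha$. *)

theory Defs
  imports Main
begin

text \<open>Strings are lists; the alphabet Sigma is the (finite) event type.
  Partial transition functions are option-valued.\<close>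

definition deltas :: "('s \<Rightarrow> 'e \<Rightarrow> 's option) \<Rightarrow> 's \<Rightarrow> 'e list \<Rightarrow> 's option" where
  "deltas \<delta> x s = foldl (\<lambda>acc \<sigma>. Option.bind acc (\<lambda>y. \<delta> y \<sigma>)) (Some x) s"

definition proj :: "'e set \<Rightarrow> 'e list \<Rightarrow> 'e list" where
  "proj So s = filter (\<lambda>e. e \<in> So) s"

definition langG :: "('x \<Rightarrow> 'e \<Rightarrow> 'x option) \<Rightarrow> 'x set \<Rightarrow> 'e list set" where
  "langG \<delta> X0 = {s. \<exists>x0\<in>X0. deltas \<delta> x0 s \<noteq> None}"

text \<open>Closed-loop language L(T/G, x0) for a map T from observations to event sets.\<close>
inductive_set clang :: "('x \<Rightarrow> 'e \<Rightarrow> 'x option) \<Rightarrow> 'e set \<Rightarrow> ('e list \<Rightarrow> 'e set) \<Rightarrow> 'x \<Rightarrow> 'e list set"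
  for \<delta> So T x0 where
  clang_Nil: "[] \<in> clang \<delta> So T x0"
| clang_snoc: "s \<in> clang \<delta> So T x0 \<Longrightarrow> deltas \<delta> x0 (s @ [\<sigma>]) \<noteq> None \<Longrightarrow> \<sigma> \<in> T (proj So s)
    \<Longrightarrow> s @ [\<sigma>] \<in> clang \<delta> So T x0"

definition clangU :: "('x \<Rightarrow> 'e \<Rightarrow> 'x option) \<Rightarrow> 'x set \<Rightarrow> 'e set \<Rightarrow> ('e list \<Rightarrow> 'e set) \<Rightarrow> 'e list set" where
  "clangU \<delta> X0 So T = (\<Union>x0\<in>X0. clang \<delta> So T x0)"

definition estC :: "('x \<Rightarrow> 'e \<Rightarrow> 'x option) \<Rightarrow> 'x set \<Rightarrow> 'e set \<Rightarrow> ('e list \<Rightarrow> 'e set) \<Rightarrow> 'e list \<Rightarrow> 'x set" where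
  "estC \<delta> X0 So T \<alpha> = {x. \<exists>x0\<in>X0. \<exists>s\<in>clang \<delta> So T x0. proj So s = \<alpha> \<and> deltas \<delta> x0 s = Some x}"

definition estI :: "('x \<Rightarrow> 'e \<Rightarrow> 'x option) \<Rightarrow> 'x set \<Rightarrow> 'e set \<Rightarrow> ('e list \<Rightarrow> 'e set) \<Rightarrow> 'e list \<Rightarrow> 'x set" where
  "estI \<delta> X0 So T \<alpha> = {x0\<in>X0. \<exists>s\<in>clang \<delta> So T x0. proj So s = \<alpha>}"

text \<open>Supervisor S : P(L(G)) -> Gamma (values outside P(L(G)) are irrelevant).\<close>
definition is_supervisor :: "('x \<Rightarrow> 'e \<Rightarrow> 'x option) \<Rightarrow> 'x set \<Rightarrow> 'e set \<Rightarrow> 'e set \<Rightarrow> ('e list \<Rightarrow> 'e set) \<Rightarrow> bool" where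
  "is_supervisor \<delta> X0 So Suc_ev S = (\<forall>\<alpha>\<in>proj So ` langG \<delta> X0. Suc_ev \<subseteq> S \<alpha>)"

definition DeltaH :: "('z \<Rightarrow> 'e \<Rightarrow> 'z option) \<Rightarrow> 'z \<Rightarrow> 'e set" where
  "DeltaH \<xi> z = {\<sigma>. \<xi> z \<sigma> \<noteq> None}"

definition realizes :: "('x \<Rightarrow> 'e \<Rightarrow> 'x option) \<Rightarrow> 'x set \<Rightarrow> 'e set \<Rightarrow> ('e list \<Rightarrow> 'e set)
    \<Rightarrow> ('z \<Rightarrow> 'e \<Rightarrow> 'z option) \<Rightarrow> 'z \<Rightarrow> bool" where
  "realizes \<delta> X0 So S \<xi> z0 =
     ((\<forall>z \<sigma> z'. \<xi> z \<sigma> = Some z' \<longrightarrow> z' \<noteq> z \<longrightarrow> \<sigma> \<in> So) \<and>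
      (\<forall>s\<in>clangU \<delta> X0 So S. \<exists>z. deltas \<xi> z0 s = Some z \<and> DeltaH \<xi> z = S (proj So s)))"

text \<open>An attacker output in Sigma_o \<union> {epsilon} is an option (None = epsilon).\<close>
definition is_attacker :: "('x \<Rightarrow> 'e \<Rightarrow> 'x option) \<Rightarrow> 'x set \<Rightarrow> 'e set \<Rightarrow> 'e set \<Rightarrow> ('e list \<Rightarrow> 'e option) \<Rightarrow> bool" where
  "is_attacker \<delta> X0 So Sv A =
     (A [] = None \<and>
      (\<forall>\<alpha> \<sigma>. \<alpha> @ [\<sigma>] \<in> proj So ` langG \<delta> X0 \<longrightarrow>
          (\<sigma> \<notin> Sv \<longrightarrow> A (\<alpha> @ [\<sigma>]) = Some \<sigma>) \<and>
          (\<sigma> \<in> Sv \<longrightarrow> A (\<alpha> @ [\<sigma>]) \<in> Some ` Sv \<union> {None})))"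

definition opt_list :: "'a option \<Rightarrow> 'a list" where
  "opt_list o' = (case o' of None \<Rightarrow> [] | Some a \<Rightarrow> [a])"

definition gA :: "('e list \<Rightarrow> 'e option) \<Rightarrow> 'e list \<Rightarrow> 'e list" where
  "gA A \<alpha> = concat (map (\<lambda>i. opt_list (A (take (Suc i) \<alpha>))) [0..<length \<alpha>])"

definition SA :: "('e list \<Rightarrow> 'e set) \<Rightarrow> ('e list \<Rightarrow> 'e option) \<Rightarrow> 'e list \<Rightarrow> 'e set" where
  "SA S A = S \<circ> gA A"

definition stealthy_along :: "('x \<Rightarrow> 'e \<Rightarrow> 'x option) \<Rightarrow> 'x set \<Rightarrow> 'e set \<Rightarrow> ('e list \<Rightarrow> 'e set)
    \<Rightarrow> ('e list \<Rightarrow> 'e option) \<Rightarrow> 'e list \<Rightarrow> bool" where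
  "stealthy_along \<delta> X0 So S A \<alpha> = (estC \<delta> X0 So S (gA A \<alpha>) \<noteq> {})"

definition IS_detectable :: "('x \<Rightarrow> 'e \<Rightarrow> 'x option) \<Rightarrow> 'x set \<Rightarrow> 'e set \<Rightarrow> ('e list \<Rightarrow> 'e set)
    \<Rightarrow> 'x set \<Rightarrow> ('e list \<Rightarrow> 'e option) \<Rightarrow> bool" where
  "IS_detectable \<delta> X0 So S Xsec A =
     (\<exists>\<alpha> \<sigma>. \<sigma> \<in> So \<and> \<alpha> @ [\<sigma>] \<in> proj So ` clangU \<delta> X0 So (SA S A) \<and>
        stealthy_along \<delta> X0 So S A \<alpha> \<and> estI \<delta> X0 So (SA S A) (\<alpha> @ [\<sigma>]) \<subseteq> Xsec)"

definition IS_attackable :: "('x \<Rightarrow> 'e \<Rightarrow> 'x option) \<Rightarrow> 'x set \<Rightarrow> 'e set \<Rightarrow> 'e set \<Rightarrow> ('e list \<Rightarrow> 'e set)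
    \<Rightarrow> 'x set \<Rightarrow> bool" where
  "IS_attackable \<delta> X0 So Sv S Xsec =
     (\<exists>A. is_attacker \<delta> X0 So Sv A \<and> IS_detectable \<delta> X0 So S Xsec A)"

text \<open>Generic over the state type, so they serve both G and the augmented system.\<close>
definition UR :: "('s \<Rightarrow> 'e \<Rightarrow> 's option) \<Rightarrow> 'e set \<Rightarrow> 'e set \<Rightarrow> 's set \<Rightarrow> 's set" where
  "UR \<delta> So \<gamma> q = {x'. \<exists>x\<in>q. \<exists>s. set s \<subseteq> (- So) \<inter> \<gamma> \<and> deltas \<delta> x s = Some x'}"

definition NX :: "('s \<Rightarrow> 'e \<Rightarrow> 's option) \<Rightarrow> 'e \<Rightarrow> 's set \<Rightarrow> 's set" where
  "NX \<delta> \<sigma> q = {x'. \<exists>x\<in>q. \<delta> x \<sigma> = Some x'}"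

definition NXo :: "('s \<Rightarrow> 'e \<Rightarrow> 's option) \<Rightarrow> 'e option \<Rightarrow> 's set \<Rightarrow> 's set" where
  "NXo \<delta> a q = (case a of None \<Rightarrow> q | Some \<sigma> \<Rightarrow> NX \<delta> \<sigma> q)"

definition Oen :: "('s \<Rightarrow> 'e \<Rightarrow> 's option) \<Rightarrow> 'e set \<Rightarrow> 's set \<Rightarrow> 'e set \<Rightarrow> 'e set" where
  "Oen \<delta> So q \<gamma> = {\<sigma>\<in>So \<inter> \<gamma>. \<exists>x\<in>q. \<exists>w. set w \<subseteq> (- So) \<inter> \<gamma> \<and> deltas \<delta> x (w @ [\<sigma>]) \<noteq> None}"

text \<open>Augmented system transition on X0 x X.\<close>
definition aug :: "('x \<Rightarrow> 'e \<Rightarrow> 'x option) \<Rightarrow> ('x \<times> 'x) \<Rightarrow> 'e \<Rightarrow> ('x \<times> 'x) option" where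
  "aug \<delta> p \<sigma> = map_option (\<lambda>y. (fst p, y)) (\<delta> (snd p) \<sigma>)"

definition Iof :: "('x \<times> 'x) set \<Rightarrow> 'x set" where
  "Iof qt = fst ` qt"

text \<open>The supervisor component is 'z option: Some z for z in Z, None for z_att.\<close>
datatype ('x, 'z, 'e) mstate =
    Env "'x set" "('x \<times> 'x) set" "'z option"
  | Att "'x set" "('x \<times> 'x) set" "'z option" 'e

text \<open>Ob sigma: observable event; Hat sigma: doctored copy; HatEps: erasure.\<close>
datatype 'e mevent = Ob 'e | Hat 'e | HatEps

fun is_env :: "('x, 'z, 'e) mstate \<Rightarrow> bool" where
  "is_env (Env _ _ _) = True"
| "is_env (Att _ _ _ _) = False"

fun is_att :: "('x, 'z, 'e) mstate \<Rightarrow> bool" where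
  "is_att (Env _ _ _) = False"
| "is_att (Att _ _ _ _) = True"

fun DeltaZ :: "('z \<Rightarrow> 'e \<Rightarrow> 'z option) \<Rightarrow> 'z option \<Rightarrow> 'e set" where
  "DeltaZ \<xi> None = {}"
| "DeltaZ \<xi> (Some z) = DeltaH \<xi> z"

definition Vset :: "'e set \<Rightarrow> 'e \<Rightarrow> 'e mevent set" where
  "Vset Sv \<sigma> = (if \<sigma> \<in> Sv then Hat ` Sv \<union> {HatEps} else {Hat \<sigma>})"

fun hat_val :: "'e mevent \<Rightarrow> 'e option" where
  "hat_val (Hat a) = Some a"
| "hat_val HatEps = None"
| "hat_val (Ob a) = Some a"

definition xi_opt :: "('z \<Rightarrow> 'e \<Rightarrow> 'z option) \<Rightarrow> 'z \<Rightarrow> 'e option \<Rightarrow> 'z option" where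
  "xi_opt \<xi> z a = (case a of None \<Rightarrow> Some z | Some b \<Rightarrow> \<xi> z b)"

fun aas_step :: "('x \<Rightarrow> 'e \<Rightarrow> 'x option) \<Rightarrow> 'e set \<Rightarrow> 'e set \<Rightarrow> ('z \<Rightarrow> 'e \<Rightarrow> 'z option)
    \<Rightarrow> ('x, 'z, 'e) mstate \<Rightarrow> 'e mevent \<Rightarrow> ('x, 'z, 'e) mstate option" where
  "aas_step \<delta> So Sv \<xi> (Env q qt z) (Ob \<sigma>) =
     (if \<sigma> \<in> Oen (aug \<delta>) So qt (DeltaZ \<xi> z) then Some (Att q qt z \<sigma>) else None)"
| "aas_step \<delta> So Sv \<xi> (Att q qt z \<sigma>) e =
     (if e \<in> Vset Sv \<sigma> then
        (let a = hat_val e;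
             \<gamma> = DeltaZ \<xi> z;
             q' = NXo \<delta> a (UR \<delta> So \<gamma> q);
             qt' = NX (aug \<delta>) \<sigma> (UR (aug \<delta>) So \<gamma> qt);
             z' = (if q' \<noteq> {} then Option.bind z (\<lambda>zz. xi_opt \<xi> zz a) else None)
         in Some (Env q' qt' z'))
      else None)"
| "aas_step \<delta> So Sv \<xi> (Env q qt z) (Hat _) = None"
| "aas_step \<delta> So Sv \<xi> (Env q qt z) HatEps = None"

definition aas_init :: "'x set \<Rightarrow> 'z \<Rightarrow> ('x, 'z, 'e) mstate" where
  "aas_init X0 z0 = Env X0 {(x, x) | x. x \<in> X0} (Some z0)"

fun Qdet :: "'x set \<Rightarrow> ('x, 'z, 'e) mstate \<Rightarrow> bool" where
  "Qdet Xsec (Env q qt z) = (Iof qt \<subseteq> Xsec \<or> Iof qt \<inter> Xsec = {})"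
| "Qdet Xsec (Att _ _ _ _) = False"

fun Qud :: "('x \<Rightarrow> 'e \<Rightarrow> 'x option) \<Rightarrow> 'e set \<Rightarrow> ('z \<Rightarrow> 'e \<Rightarrow> 'z option) \<Rightarrow> 'x set
    \<Rightarrow> ('x, 'z, 'e) mstate \<Rightarrow> bool" where
  "Qud \<delta> So \<xi> Xsec (Env q qt z) =
     (Iof qt \<inter> Xsec \<noteq> {} \<and>
      (\<forall>(x0, x)\<in>UR (aug \<delta>) So (DeltaZ \<xi> z) qt. x0 \<in> Xsec \<longrightarrow>
          (\<exists>x0'. (x0', x) \<in> UR (aug \<delta>) So (DeltaZ \<xi> z) qt \<and> x0' \<notin> Xsec)))"
| "Qud \<delta> So \<xi> Xsec (Att _ _ _ _) = False"

text \<open>Transitions of the simplified AAS (before restriction to the reachable part).\<close>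
definition ms_step :: "('x \<Rightarrow> 'e \<Rightarrow> 'x option) \<Rightarrow> 'e set \<Rightarrow> 'e set \<Rightarrow> ('z \<Rightarrow> 'e \<Rightarrow> 'z option) \<Rightarrow> 'x set
    \<Rightarrow> ('x, 'z, 'e) mstate \<Rightarrow> 'e mevent \<Rightarrow> ('x, 'z, 'e) mstate option" where
  "ms_step \<delta> So Sv \<xi> Xsec s e =
     (if Qdet Xsec s \<or> Qud \<delta> So \<xi> Xsec s then None else aas_step \<delta> So Sv \<xi> s e)"

inductive_set reach :: "('s \<Rightarrow> 'a \<Rightarrow> 's option) \<Rightarrow> 's \<Rightarrow> 's set" for step q0 where
  reach_init: "q0 \<in> reach step q0"
| reach_step: "q \<in> reach step q0 \<Longrightarrow> step q e = Some q' \<Longrightarrow> q' \<in> reach step q0"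

text \<open>Single attack structure m (given by its transition function) of the automaton
  with transition function ms and initial state q0 (states reachable from q0).\<close>
definition is_SAS :: "(('x, 'z, 'e) mstate \<Rightarrow> 'e mevent \<Rightarrow> ('x, 'z, 'e) mstate option)
    \<Rightarrow> ('x, 'z, 'e) mstate \<Rightarrow> (('x, 'z, 'e) mstate \<Rightarrow> 'e mevent \<Rightarrow> ('x, 'z, 'e) mstate option) \<Rightarrow> bool" where
  "is_SAS ms q0 m =
     ((\<forall>q e q'. m q e = Some q' \<longrightarrow> q \<in> reach ms q0 \<and> ms q e = Some q') \<and>
      (\<forall>q\<in>reach m q0. is_att q \<longrightarrow> (\<exists>!e. m q e \<noteq> None)) \<and>
      (\<forall>q\<in>reach m q0. is_env q \<longrightarrow> (\<forall>e. ms q e \<noteq> None \<longrightarrow> m q e = ms q e)))"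

definition obs_of :: "'e mevent list \<Rightarrow> 'e list" where
  "obs_of h = concat (map (\<lambda>e. case e of Ob \<sigma> \<Rightarrow> [\<sigma>] | _ \<Rightarrow> []) h)"

definition ext_strings :: "(('x, 'z, 'e) mstate \<Rightarrow> 'e mevent \<Rightarrow> ('x, 'z, 'e) mstate option)
    \<Rightarrow> ('x, 'z, 'e) mstate \<Rightarrow> 'e mevent list set" where
  "ext_strings m q0 = {h. \<exists>q. deltas m q0 h = Some q \<and> is_env q}"

definition induced :: "(('x, 'z, 'e) mstate \<Rightarrow> 'e mevent \<Rightarrow> ('x, 'z, 'e) mstate option)
    \<Rightarrow> ('x, 'z, 'e) mstate \<Rightarrow> 'e list \<Rightarrow> 'e option" where
  "induced m q0 \<alpha> =
     (if \<alpha> = [] then None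
      else if \<exists>h\<in>ext_strings m q0. obs_of h = \<alpha>
      then hat_val (last (THE h. h \<in> ext_strings m q0 \<and> obs_of h = \<alpha>))
      else Some (last \<alpha>))"

end

theory Submission
  imports Defs
begin


lemma foldl_None: "foldl (\<lambda>acc \<sigma>. Option.bind acc (\<lambda>y. \<delta> y \<sigma>)) None s = None"
  by (induction s) auto

lemma deltas_Nil[simp]: "deltas \<delta> x [] = Some x" by (simp add: deltas_def)

lemma deltas_Cons[simp]: "deltas \<delta> x (\<sigma>#s) = (case \<delta> x \<sigma> of None \<Rightarrow> None | Some y \<Rightarrow> deltas \<delta> y s)"
  by (cases "\<delta> x \<sigma>") (auto simp: deltas_def foldl_None)

lemma deltas_append: "deltas \<delta> x (s@t) = Option.bind (deltas \<delta> x s) (\<lambda>y. deltas \<delta> y t)"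
  by (induction s arbitrary: x) (auto split: option.splits)

lemma deltas_snoc: "deltas \<delta> x (s@[\<sigma>]) = Option.bind (deltas \<delta> x s) (\<lambda>y. \<delta> y \<sigma>)"
  by (cases "deltas \<delta> x s") (auto simp: deltas_append split: option.splits)

lemma proj_append[simp]: "proj So (s@t) = proj So s @ proj So t" by (simp add: proj_def)
lemma proj_Nil[simp]: "proj So [] = []" by (simp add: proj_def)
lemma proj_Cons: "proj So (a#s) = (if a \<in> So then a # proj So s else proj So s)" by (simp add: proj_def)
lemma proj_single[simp]: "proj So [a] = (if a \<in> So then [a] else [])" by (simp add: proj_def)
lemma proj_empty_iff: "proj So s = [] \<longleftrightarrow> set s \<subseteq> - So" by (auto simp: proj_def filter_empty_conv)

lemma proj_split: "proj So s = \<alpha> @ \<gamma> \<Longrightarrow> \<exists>s1 s2. s = s1 @ s2 \<and> proj So s1 = \<alpha> \<and> proj So s2 = \<gamma>"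
proof (induction s arbitrary: \<alpha>)
  case Nil then show ?case by auto
next
  case (Cons a s)
  show ?case
  proof (cases "\<alpha>")
    case Nil then show ?thesis using Cons.prems by (intro exI[of _ "[]"] exI[of _ "a#s"]) auto
  next
    case (Cons b \<alpha>')
    show ?thesis
    proof (cases "a \<in> So")
      case True
      then have "proj So s = \<alpha>' @ \<gamma>" "a = b" using Cons.prems \<open>\<alpha> = b#\<alpha>'\<close> by (auto simp: proj_Cons)
      then obtain s1 s2 where "s = s1@s2" "proj So s1 = \<alpha>'" "proj So s2 = \<gamma>" using Cons.IH by blast
      then show ?thesis using True \<open>\<alpha> = b#\<alpha>'\<close> \<open>a = b\<close> by (intro exI[of _ "a#s1"] exI[of _ s2]) (auto simp: proj_Cons)
    next
      case False
      then have "proj So s = \<alpha> @ \<gamma>" using Cons.prems by (auto simp: proj_Cons)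
      then obtain s1 s2 where "s = s1@s2" "proj So s1 = \<alpha>" "proj So s2 = \<gamma>" using Cons.IH by blast
      then show ?thesis using False by (intro exI[of _ "a#s1"] exI[of _ s2]) (auto simp: proj_Cons)
    qed
  qed
qed

lemma proj_snoc_split: "proj So s = \<beta> @ [\<sigma>] \<Longrightarrow> \<exists>s1 w. s = s1 @ [\<sigma>] @ w \<and> proj So s1 = \<beta> \<and> set w \<subseteq> - So \<and> \<sigma> \<in> So"
proof (induction s rule: rev_induct)
  case Nil then show ?case by simp
next
  case (snoc a s)
  show ?case
  proof (cases "a \<in> So")
    case True
    then show ?thesis using snoc.prems by (intro exI[of _ s] exI[of _ "[]"]) auto
  next
    case False
    then have "proj So s = \<beta> @ [\<sigma>]" using snoc.prems by auto
    then obtain s1 w where "s = s1 @ [\<sigma>] @ w" "proj So s1 = \<beta>" "set w \<subseteq> - So" "\<sigma> \<in> So" using snoc.IH by blast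
    then show ?thesis using False by (intro exI[of _ s1] exI[of _ "w@[a]"]) auto
  qed
qed

lemma clang_deltas: "s \<in> clang \<delta> So T x0 \<Longrightarrow> deltas \<delta> x0 s \<noteq> None"
  by (induction rule: clang.induct) auto

lemma clang_snoc_iff: "s@[\<sigma>] \<in> clang \<delta> So T x0 \<longleftrightarrow> s \<in> clang \<delta> So T x0 \<and> deltas \<delta> x0 (s@[\<sigma>]) \<noteq> None \<and> \<sigma> \<in> T (proj So s)"
proof
  assume "s@[\<sigma>] \<in> clang \<delta> So T x0"
  then show "s \<in> clang \<delta> So T x0 \<and> deltas \<delta> x0 (s@[\<sigma>]) \<noteq> None \<and> \<sigma> \<in> T (proj So s)"
    by (cases rule: clang.cases) auto
qed (auto intro: clang.intros)

lemma clang_prefix: "s@t \<in> clang \<delta> So T x0 \<Longrightarrow> s \<in> clang \<delta> So T x0"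
  by (induction t rule: rev_induct) (auto simp: clang_snoc_iff simp flip: append_assoc)

lemma clang_unobs_in_T: "s@w \<in> clang \<delta> So T x0 \<Longrightarrow> set w \<subseteq> - So \<Longrightarrow> set w \<subseteq> T (proj So s)"
proof (induction w rule: rev_induct)
  case Nil then show ?case by simp
next
  case (snoc a w)
  have pw: "proj So w = []" using snoc.prems by (simp add: proj_empty_iff)
  have c: "(s@w)@[a] \<in> clang \<delta> So T x0" using snoc.prems by simp
  then have "s@w \<in> clang \<delta> So T x0" by (rule clang_prefix)
  then have "set w \<subseteq> T (proj So s)" using snoc by auto
  moreover have "a \<in> T (proj So (s@w))" using c unfolding clang_snoc_iff by blast
  then have "a \<in> T (proj So s)" using pw by simp
  ultimately show ?case by auto
qed

lemma clang_append_unobs: "s \<in> clang \<delta> So T x0 \<Longrightarrow> set w \<subseteq> - So \<inter> T (proj So s) \<Longrightarrow> deltas \<delta> x0 (s@w) \<noteq> None \<Longrightarrow> s@w \<in> clang \<delta> So T x0"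
proof (induction w rule: rev_induct)
  case Nil then show ?case by simp
next
  case (snoc a w)
  have pw: "proj So w = []" using snoc.prems by (auto simp: proj_empty_iff)
  have "deltas \<delta> x0 (s@w) \<noteq> None" using snoc.prems(3)
    by (cases "deltas \<delta> x0 (s@w)") (auto simp: deltas_snoc simp flip: append_assoc)
  then have "s@w \<in> clang \<delta> So T x0" using snoc by auto
  then show ?case using snoc.prems pw by (auto simp: clang_snoc_iff simp flip: append_assoc)
qed

lemma clang_transfer:
  assumes "s1 \<in> clang \<delta> So T x0" "s1' \<in> clang \<delta> So T x0'"
    "deltas \<delta> x0 s1 = Some x" "deltas \<delta> x0' s1' = Some x" "proj So s1 = proj So s1'"
    "s1 @ s2 \<in> clang \<delta> So T x0"
  shows "s1' @ s2 \<in> clang \<delta> So T x0'"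
  using assms(6)
proof (induction s2 rule: rev_induct)
  case Nil then show ?case using assms by simp
next
  case (snoc a s2)
  have 1: "(s1@s2)@[a] \<in> clang \<delta> So T x0" using snoc.prems by simp
  then have "s1@s2 \<in> clang \<delta> So T x0" by (rule clang_prefix)
  then have IH: "s1'@s2 \<in> clang \<delta> So T x0'" using snoc.IH by simp
  have "deltas \<delta> x0' ((s1'@s2)@[a]) = deltas \<delta> x0 ((s1@s2)@[a])"
    using assms(3,4) by (simp add: deltas_append)
  moreover have "a \<in> T (proj So (s1@s2))" using 1 unfolding clang_snoc_iff by blast
  ultimately have "(s1'@s2)@[a] \<in> clang \<delta> So T x0'" using 1 IH assms(5) unfolding clang_snoc_iff by auto
  then show ?case by simp
qed



definition Full :: "('x \<Rightarrow> 'e \<Rightarrow> 'x option) \<Rightarrow> 'e set \<Rightarrow> ('e list \<Rightarrow> 'e set) \<Rightarrow> 'x \<Rightarrow> 'e list \<Rightarrow> 'x set" where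
  "Full \<delta> So T x0 \<beta> = {x. \<exists>s\<in>clang \<delta> So T x0. proj So s = \<beta> \<and> deltas \<delta> x0 s = Some x}"

lemma Full_Nil: "Full \<delta> So T x0 [] = UR \<delta> So (T []) {x0}"
proof
  show "Full \<delta> So T x0 [] \<subseteq> UR \<delta> So (T []) {x0}"
  proof
    fix x assume "x \<in> Full \<delta> So T x0 []"
    then obtain s where s: "s \<in> clang \<delta> So T x0" "proj So s = []" "deltas \<delta> x0 s = Some x"
      by (auto simp: Full_def)
    then have "set s \<subseteq> - So" by (simp add: proj_empty_iff)
    moreover have "set s \<subseteq> T (proj So [])" using clang_unobs_in_T[of "[]" s] s \<open>set s \<subseteq> - So\<close> by simp
    ultimately show "x \<in> UR \<delta> So (T []) {x0}" using s by (auto simp: UR_def)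
  qed
next
  show "UR \<delta> So (T []) {x0} \<subseteq> Full \<delta> So T x0 []"
  proof
    fix x assume "x \<in> UR \<delta> So (T []) {x0}"
    then obtain s where s: "set s \<subseteq> - So \<inter> T []" "deltas \<delta> x0 s = Some x" by (auto simp: UR_def)
    have "[] @ s \<in> clang \<delta> So T x0" using s by (intro clang_append_unobs) (auto intro: clang.intros)
    moreover have "proj So s = []" using s by (simp add: proj_empty_iff)
    ultimately show "x \<in> Full \<delta> So T x0 []" using s by (auto simp: Full_def)
  qed
qed

lemma Full_snoc:
  assumes "\<sigma> \<in> So"
  shows "Full \<delta> So T x0 (\<beta>@[\<sigma>]) = (if \<sigma> \<in> T \<beta> then UR \<delta> So (T (\<beta>@[\<sigma>])) (NX \<delta> \<sigma> (Full \<delta> So T x0 \<beta>)) else {})"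
proof -
  have sub: "x \<in> Full \<delta> So T x0 (\<beta>@[\<sigma>]) \<Longrightarrow> \<sigma> \<in> T \<beta> \<and> x \<in> UR \<delta> So (T (\<beta>@[\<sigma>])) (NX \<delta> \<sigma> (Full \<delta> So T x0 \<beta>))" for x
  proof -
    assume "x \<in> Full \<delta> So T x0 (\<beta>@[\<sigma>])"
    then obtain s where s: "s \<in> clang \<delta> So T x0" "proj So s = \<beta>@[\<sigma>]" "deltas \<delta> x0 s = Some x"
      by (auto simp: Full_def)
    obtain s1 w where sw: "s = s1 @ [\<sigma>] @ w" "proj So s1 = \<beta>" "set w \<subseteq> - So"
      using proj_snoc_split[OF s(2)] by blast
    have c1: "s1@[\<sigma>] \<in> clang \<delta> So T x0" using s(1) sw(1) clang_prefix[of "s1@[\<sigma>]" w] by simp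
    then have s1c: "s1 \<in> clang \<delta> So T x0" and sT: "\<sigma> \<in> T \<beta>" and dd: "deltas \<delta> x0 (s1@[\<sigma>]) \<noteq> None"
      using sw unfolding clang_snoc_iff by auto
    obtain y where y: "deltas \<delta> x0 s1 = Some y" using clang_deltas[OF s1c] by auto
    obtain y' where y': "\<delta> y \<sigma> = Some y'" using dd y by (auto simp: deltas_snoc)
    have "(s1@[\<sigma>])@w \<in> clang \<delta> So T x0" using s(1) sw(1) by simp
    from clang_unobs_in_T[OF this sw(3)] have "set w \<subseteq> T (proj So (s1@[\<sigma>]))" .
    then have wT: "set w \<subseteq> T (\<beta>@[\<sigma>])" using sw assms by simp
    have "deltas \<delta> y' w = Some x" using s(3) sw(1) y y' by (simp add: deltas_append)
    moreover have "y \<in> Full \<delta> So T x0 \<beta>" using s1c sw y by (auto simp: Full_def)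
    ultimately show ?thesis using sT y' wT sw(3) by (auto simp: UR_def NX_def)
  qed
  have sup: "\<sigma> \<in> T \<beta> \<Longrightarrow> x \<in> UR \<delta> So (T (\<beta>@[\<sigma>])) (NX \<delta> \<sigma> (Full \<delta> So T x0 \<beta>)) \<Longrightarrow> x \<in> Full \<delta> So T x0 (\<beta>@[\<sigma>])" for x
  proof -
    assume sT: "\<sigma> \<in> T \<beta>" and "x \<in> UR \<delta> So (T (\<beta>@[\<sigma>])) (NX \<delta> \<sigma> (Full \<delta> So T x0 \<beta>))"
    then obtain y' w y s1 where w: "set w \<subseteq> - So \<inter> T (\<beta>@[\<sigma>])" "deltas \<delta> y' w = Some x"
      and y': "\<delta> y \<sigma> = Some y'" and s1: "s1 \<in> clang \<delta> So T x0" "proj So s1 = \<beta>" "deltas \<delta> x0 s1 = Some y"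
      by (auto simp: UR_def NX_def Full_def)
    have c1: "s1@[\<sigma>] \<in> clang \<delta> So T x0" using s1 y' sT unfolding clang_snoc_iff by (auto simp: deltas_snoc)
    have d: "deltas \<delta> x0 ((s1@[\<sigma>])@w) = Some x" using s1 y' w by (simp add: deltas_append deltas_snoc del: append_assoc)
    have "set w \<subseteq> - So \<inter> T (proj So (s1@[\<sigma>]))" using w s1 assms by simp
    from clang_append_unobs[OF c1 this] d have "(s1@[\<sigma>]) @ w \<in> clang \<delta> So T x0" by simp
    moreover have "proj So ((s1@[\<sigma>])@w) = \<beta>@[\<sigma>]" using s1 w assms by (simp add: proj_empty_iff[symmetric] del: append_assoc)
    moreover note d
    ultimately show ?thesis unfolding Full_def by blast
  qed
  show ?thesis using sub sup by auto
qed

lemma Full_snoc_nonempty: "Full \<delta> So T x0 (\<beta>@[\<sigma>]) \<noteq> {} \<Longrightarrow> \<sigma> \<in> So \<and> \<sigma> \<in> T \<beta>"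
proof -
  assume "Full \<delta> So T x0 (\<beta>@[\<sigma>]) \<noteq> {}"
  then obtain s x where s: "s \<in> clang \<delta> So T x0" "proj So s = \<beta>@[\<sigma>]" "deltas \<delta> x0 s = Some x"
    by (auto simp: Full_def)
  have "\<sigma> \<in> So" using proj_snoc_split[OF s(2)] by blast
  then show ?thesis using \<open>Full \<delta> So T x0 (\<beta>@[\<sigma>]) \<noteq> {}\<close> Full_snoc[of \<sigma> So \<delta> T x0 \<beta>] by (auto split: if_splits)
qed

lemma Full_prefix: "Full \<delta> So T x0 (\<alpha>@\<gamma>) \<noteq> {} \<Longrightarrow> Full \<delta> So T x0 \<alpha> \<noteq> {}"
proof -
  assume "Full \<delta> So T x0 (\<alpha>@\<gamma>) \<noteq> {}"
  then obtain s x where s: "s \<in> clang \<delta> So T x0" "proj So s = \<alpha>@\<gamma>" "deltas \<delta> x0 s = Some x"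
    by (auto simp: Full_def)
  obtain s1 s2 where "s = s1@s2" "proj So s1 = \<alpha>" using proj_split[OF s(2)] by blast
  then have "s1 \<in> clang \<delta> So T x0" using s clang_prefix[of s1 s2] by simp
  then obtain y where "deltas \<delta> x0 s1 = Some y" using clang_deltas by fastforce
  then show ?thesis using \<open>s1 \<in> clang \<delta> So T x0\<close> \<open>proj So s1 = \<alpha>\<close> by (auto simp: Full_def)
qed

lemma UR_empty[simp]: "UR \<delta> So \<gamma> {} = {}" by (auto simp: UR_def)
lemma UR_incl: "q \<subseteq> UR \<delta> So \<gamma> q" by (auto simp: UR_def intro!: exI[of _ "[]"])
lemma UR_idem[simp]: "UR \<delta> So \<gamma> (UR \<delta> So \<gamma> q) = UR \<delta> So \<gamma> q"
proof
  show "UR \<delta> So \<gamma> (UR \<delta> So \<gamma> q) \<subseteq> UR \<delta> So \<gamma> q"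
  proof
    fix x assume "x \<in> UR \<delta> So \<gamma> (UR \<delta> So \<gamma> q)"
    then obtain y s x1 s1 where "x1 \<in> q" "set s1 \<subseteq> - So \<inter> \<gamma>" "deltas \<delta> x1 s1 = Some y"
       "set s \<subseteq> - So \<inter> \<gamma>" "deltas \<delta> y s = Some x" by (auto simp: UR_def)
    then show "x \<in> UR \<delta> So \<gamma> q" unfolding UR_def by (auto simp: deltas_append intro!: bexI[of _ x1] exI[of _ "s1@s"])
  qed
qed (rule UR_incl)
lemma UR_empty_iff[simp]: "UR \<delta> So \<gamma> q = {} \<longleftrightarrow> q = {}"
  using UR_incl[of q \<delta> So \<gamma>] by auto
lemma UR_Union: "UR \<delta> So \<gamma> (\<Union>i\<in>I. f i) = (\<Union>i\<in>I. UR \<delta> So \<gamma> (f i))"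
  by (auto simp: UR_def)
lemma NX_Union: "NX \<delta> \<sigma> (\<Union>i\<in>I. f i) = (\<Union>i\<in>I. NX \<delta> \<sigma> (f i))"
  by (auto simp: NX_def)
lemma NX_empty_iff: "NX \<delta> \<sigma> q = {} \<longleftrightarrow> (\<forall>x\<in>q. \<delta> x \<sigma> = None)"
  by (auto simp: NX_def) (meson not_None_eq)

lemma deltas_aug: "deltas (aug \<delta>) p s = map_option (\<lambda>y. (fst p, y)) (deltas \<delta> (snd p) s)"
  by (induction s arbitrary: p) (auto simp: aug_def split: option.splits)

lemma aug_Some[simp]: "aug \<delta> (a,b) \<sigma> = Some (c,d) \<longleftrightarrow> a = c \<and> \<delta> b \<sigma> = Some d"
  by (auto simp: aug_def)

lemma clang_deltas_Some: "s \<in> clang \<delta> So T x0 \<Longrightarrow> \<exists>x. deltas \<delta> x0 s = Some x"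
  using clang_deltas by fastforce

lemma UR_aug: "(x0,y) \<in> UR (aug \<delta>) So \<gamma> Q \<longleftrightarrow> (\<exists>x. (x0,x) \<in> Q \<and> y \<in> UR \<delta> So \<gamma> {x})"
proof
  assume "(x0,y) \<in> UR (aug \<delta>) So \<gamma> Q"
  then obtain p s where "p \<in> Q" "set s \<subseteq> - So \<inter> \<gamma>" "deltas (aug \<delta>) p s = Some (x0,y)"
    by (auto simp: UR_def)
  then show "\<exists>x. (x0,x) \<in> Q \<and> y \<in> UR \<delta> So \<gamma> {x}"
    by (cases p) (auto simp: UR_def deltas_aug)
next
  assume "\<exists>x. (x0,x) \<in> Q \<and> y \<in> UR \<delta> So \<gamma> {x}"
  then obtain x s where "(x0,x) \<in> Q" "set s \<subseteq> - So \<inter> \<gamma>" "deltas \<delta> x s = Some y"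
    by (auto simp: UR_def)
  then show "(x0,y) \<in> UR (aug \<delta>) So \<gamma> Q"
    unfolding UR_def by (auto simp: deltas_aug intro!: bexI[of _ "(x0,x)"] exI[of _ s])
qed

lemma NX_aug: "(x0,y) \<in> NX (aug \<delta>) \<sigma> Q \<longleftrightarrow> (\<exists>x. (x0,x) \<in> Q \<and> \<delta> x \<sigma> = Some y)"
proof
  assume "(x0,y) \<in> NX (aug \<delta>) \<sigma> Q"
  then obtain p where "p \<in> Q" "aug \<delta> p \<sigma> = Some (x0,y)" by (auto simp: NX_def)
  then show "\<exists>x. (x0,x) \<in> Q \<and> \<delta> x \<sigma> = Some y" by (cases p) auto
next
  assume "\<exists>x. (x0,x) \<in> Q \<and> \<delta> x \<sigma> = Some y"
  then show "(x0,y) \<in> NX (aug \<delta>) \<sigma> Q" unfolding NX_def by force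
qed

lemma Iof_UR_aug[simp]: "Iof (UR (aug \<delta>) So \<gamma> Q) = Iof Q"
proof
  show "Iof (UR (aug \<delta>) So \<gamma> Q) \<subseteq> Iof Q"
    by (auto simp: Iof_def UR_def deltas_aug intro: rev_image_eqI)
  show "Iof Q \<subseteq> Iof (UR (aug \<delta>) So \<gamma> Q)"
    using UR_incl[of Q "aug \<delta>" So \<gamma>] by (auto simp: Iof_def)
qed

lemma Iof_NX_aug: "Iof (NX (aug \<delta>) \<sigma> Q) \<subseteq> Iof Q"
  by (auto simp: Iof_def NX_def aug_def intro: rev_image_eqI)

lemma Oen_UR: "\<sigma> \<in> Oen \<delta> So q \<gamma> \<longleftrightarrow> \<sigma> \<in> So \<and> \<sigma> \<in> \<gamma> \<and> (\<exists>y \<in> UR \<delta> So \<gamma> q. \<delta> y \<sigma> \<noteq> None)"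
proof
  assume "\<sigma> \<in> Oen \<delta> So q \<gamma>"
  then obtain x w where "\<sigma> \<in> So" "\<sigma> \<in> \<gamma>" "x \<in> q" "set w \<subseteq> - So \<inter> \<gamma>" "deltas \<delta> x (w@[\<sigma>]) \<noteq> None"
    by (auto simp: Oen_def)
  then obtain y where "deltas \<delta> x w = Some y" "\<delta> y \<sigma> \<noteq> None"
    by (cases "deltas \<delta> x w") (auto simp: deltas_snoc)
  then show "\<sigma> \<in> So \<and> \<sigma> \<in> \<gamma> \<and> (\<exists>y \<in> UR \<delta> So \<gamma> q. \<delta> y \<sigma> \<noteq> None)"
    using \<open>\<sigma> \<in> So\<close> \<open>\<sigma> \<in> \<gamma>\<close> \<open>x \<in> q\<close> \<open>set w \<subseteq> _\<close> unfolding UR_def by blast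
next
  assume "\<sigma> \<in> So \<and> \<sigma> \<in> \<gamma> \<and> (\<exists>y \<in> UR \<delta> So \<gamma> q. \<delta> y \<sigma> \<noteq> None)"
  then obtain y x w where "\<sigma> \<in> So" "\<sigma> \<in> \<gamma>" "x \<in> q" "set w \<subseteq> - So \<inter> \<gamma>" "deltas \<delta> x w = Some y" "\<delta> y \<sigma> \<noteq> None"
    unfolding UR_def by blast
  then show "\<sigma> \<in> Oen \<delta> So q \<gamma>" unfolding Oen_def by (auto simp: deltas_snoc intro!: bexI[of _ x] exI[of _ w])
qed

definition FA :: "('x \<Rightarrow> 'e \<Rightarrow> 'x option) \<Rightarrow> 'x set \<Rightarrow> 'e set \<Rightarrow> ('e list \<Rightarrow> 'e set) \<Rightarrow> 'e list \<Rightarrow> ('x \<times> 'x) set" where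
  "FA \<delta> X0 So T \<beta> = {(x0,x). x0 \<in> X0 \<and> x \<in> Full \<delta> So T x0 \<beta>}"

lemma FA_Nil: "UR (aug \<delta>) So (T []) {(x, x) | x. x \<in> X0} = FA \<delta> X0 So T []"
proof -
  have "p \<in> UR (aug \<delta>) So (T []) {(x, x) | x. x \<in> X0} \<longleftrightarrow> p \<in> FA \<delta> X0 So T []" for p
    by (cases p) (auto simp: UR_aug FA_def Full_Nil)
  then show ?thesis by blast
qed

lemma FA_snoc:
  assumes "\<sigma> \<in> So" "\<sigma> \<in> T \<beta>"
  shows "UR (aug \<delta>) So (T (\<beta>@[\<sigma>])) (NX (aug \<delta>) \<sigma> (FA \<delta> X0 So T \<beta>)) = FA \<delta> X0 So T (\<beta>@[\<sigma>])"
proof -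
  have "p \<in> UR (aug \<delta>) So (T (\<beta>@[\<sigma>])) (NX (aug \<delta>) \<sigma> (FA \<delta> X0 So T \<beta>)) \<longleftrightarrow> p \<in> FA \<delta> X0 So T (\<beta>@[\<sigma>])" for p
  proof (cases p)
    case (Pair x0 y)
    have "y \<in> UR \<delta> So (T (\<beta>@[\<sigma>])) (NX \<delta> \<sigma> (Full \<delta> So T x0 \<beta>)) \<longleftrightarrow>
          (\<exists>x. x \<in> NX \<delta> \<sigma> (Full \<delta> So T x0 \<beta>) \<and> y \<in> UR \<delta> So (T (\<beta>@[\<sigma>])) {x})"
      by (auto simp: UR_def)
    have "p \<in> UR (aug \<delta>) So (T (\<beta>@[\<sigma>])) (NX (aug \<delta>) \<sigma> (FA \<delta> X0 So T \<beta>)) \<longleftrightarrow>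
       (\<exists>x. (\<exists>x'. x0 \<in> X0 \<and> x' \<in> Full \<delta> So T x0 \<beta> \<and> \<delta> x' \<sigma> = Some x) \<and> y \<in> UR \<delta> So (T (\<beta>@[\<sigma>])) {x})"
      using Pair by (simp add: UR_aug NX_aug FA_def)
    also have "\<dots> \<longleftrightarrow> x0 \<in> X0 \<and> (\<exists>x. x \<in> NX \<delta> \<sigma> (Full \<delta> So T x0 \<beta>) \<and> y \<in> UR \<delta> So (T (\<beta>@[\<sigma>])) {x})"
      by (auto simp: NX_def)
    finally show ?thesis using Pair assms \<open>y \<in> _ \<longleftrightarrow> _\<close> by (simp add: FA_def Full_snoc)
  qed
  then show ?thesis by blast
qed

lemma Iof_FA: "Iof (FA \<delta> X0 So T \<beta>) = estI \<delta> X0 So T \<beta>"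
  by (auto simp: Iof_def FA_def estI_def Full_def image_def) (metis clang_deltas_Some)+

lemma estC_Full: "estC \<delta> X0 So T \<alpha> = (\<Union>x0\<in>X0. Full \<delta> So T x0 \<alpha>)"
  by (auto simp: estC_def Full_def)

lemma obs_iff: "\<beta> \<in> proj So ` clangU \<delta> X0 So T \<longleftrightarrow> (\<exists>x0\<in>X0. Full \<delta> So T x0 \<beta> \<noteq> {})"
  by (auto simp: clangU_def Full_def image_def) (metis clang_deltas_Some)+

lemma estI_Full: "estI \<delta> X0 So T \<beta> = {x0\<in>X0. Full \<delta> So T x0 \<beta> \<noteq> {}}"
  by (auto simp: estI_def Full_def) (metis clang_deltas_Some)+

lemma estI_mono: "estI \<delta> X0 So T (\<alpha>@\<gamma>) \<subseteq> estI \<delta> X0 So T \<alpha>"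
  using Full_prefix[of \<delta> So T _ \<alpha> \<gamma>] by (auto simp: estI_Full)



lemma gA_Nil[simp]: "gA A [] = []" by (simp add: gA_def)

lemma gA_snoc: "gA A (\<beta>@[\<sigma>]) = gA A \<beta> @ opt_list (A (\<beta>@[\<sigma>]))"
proof -
  have meq: "map (\<lambda>i. opt_list (A (take (Suc i) (\<beta>@[\<sigma>])))) [0..<length \<beta>] =
        map (\<lambda>i. opt_list (A (take (Suc i) \<beta>))) [0..<length \<beta>]"
    by (rule map_cong) auto
  show ?thesis unfolding gA_def by (simp add: meq del: take_append)
qed

lemma gA_prefix: "\<exists>r. gA A (\<beta>@\<gamma>) = gA A \<beta> @ r"
proof (induction \<gamma> rule: rev_induct)
  case Nil then show ?case by simp
next
  case (snoc a \<gamma>)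
  then obtain r where "gA A (\<beta>@\<gamma>) = gA A \<beta> @ r" by blast
  then show ?case using gA_snoc[of A "\<beta>@\<gamma>" a] by simp
qed

lemma SA_apply: "SA S A \<beta> = S (gA A \<beta>)" by (simp add: SA_def)

lemma realizes_proj:
  assumes "realizes \<delta> X0 So S \<xi> z0"
  shows "deltas \<xi> z s = Some z' \<Longrightarrow> deltas \<xi> z (proj So s) = Some z'"
proof (induction s arbitrary: z' rule: rev_induct)
  case Nil then show ?case by simp
next
  case (snoc a s)
  then obtain y where y: "deltas \<xi> z s = Some y" "\<xi> y a = Some z'"
    by (cases "deltas \<xi> z s") (auto simp: deltas_snoc)
  show ?case
  proof (cases "a \<in> So")
    case True then show ?thesis using snoc.IH y by (simp add: deltas_snoc)
  next
    case False
    then have "z' = y" using assms y(2) unfolding realizes_def by blast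
    then show ?thesis using snoc.IH y False by simp
  qed
qed

lemma estC_snoc:
  assumes "b \<in> So"
  shows "estC \<delta> X0 So S (\<alpha>@[b]) = (if b \<in> S \<alpha> then UR \<delta> So (S (\<alpha>@[b])) (NX \<delta> b (estC \<delta> X0 So S \<alpha>)) else {})"
  using assms by (simp add: estC_Full Full_snoc UR_Union NX_Union)

lemma estC_prefix: "estC \<delta> X0 So S (\<alpha>@\<gamma>) \<noteq> {} \<Longrightarrow> estC \<delta> X0 So S \<alpha> \<noteq> {}"
  using Full_prefix[of \<delta> So S _ \<alpha> \<gamma>] by (auto simp: estC_Full)

definition envstep :: "('x \<Rightarrow> 'e \<Rightarrow> 'x option) \<Rightarrow> 'e set \<Rightarrow> ('z \<Rightarrow> 'e \<Rightarrow> 'z option)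
   \<Rightarrow> 'x set \<times> ('x \<times> 'x) set \<times> 'z option \<Rightarrow> 'e \<Rightarrow> 'e option \<Rightarrow> 'x set \<times> ('x \<times> 'x) set \<times> 'z option" where
  "envstep \<delta> So \<xi> st \<sigma> a = (case st of (q, qt, z) \<Rightarrow>
     (let \<gamma> = DeltaZ \<xi> z;
          q' = NXo \<delta> a (UR \<delta> So \<gamma> q);
          qt' = NX (aug \<delta>) \<sigma> (UR (aug \<delta>) So \<gamma> qt);
          z' = (if q' \<noteq> {} then Option.bind z (\<lambda>zz. xi_opt \<xi> zz a) else None)
      in (q', qt', z')))"

fun runr :: "('x \<Rightarrow> 'e \<Rightarrow> 'x option) \<Rightarrow> 'e set \<Rightarrow> ('z \<Rightarrow> 'e \<Rightarrow> 'z option) \<Rightarrow> 'x set \<Rightarrow> 'z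
   \<Rightarrow> ('e list \<Rightarrow> 'e option) \<Rightarrow> 'e list \<Rightarrow> 'x set \<times> ('x \<times> 'x) set \<times> 'z option" where
  "runr \<delta> So \<xi> X0 z0 A [] = (X0, {(x, x) | x. x \<in> X0}, Some z0)"
| "runr \<delta> So \<xi> X0 z0 A (\<sigma>#r) = envstep \<delta> So \<xi> (runr \<delta> So \<xi> X0 z0 A r) \<sigma> (A (rev (\<sigma>#r)))"

definition run where "run \<delta> So \<xi> X0 z0 A \<beta> = runr \<delta> So \<xi> X0 z0 A (rev \<beta>)"

lemma run_Nil[simp]: "run \<delta> So \<xi> X0 z0 A [] = (X0, {(x, x) | x. x \<in> X0}, Some z0)"
  by (simp add: run_def)

lemma run_snoc: "run \<delta> So \<xi> X0 z0 A (\<beta>@[\<sigma>]) = envstep \<delta> So \<xi> (run \<delta> So \<xi> X0 z0 A \<beta>) \<sigma> (A (\<beta>@[\<sigma>]))"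
  by (simp add: run_def)

lemma aas_step_Att: "aas_step \<delta> So Sv \<xi> (Att q qt z \<sigma>) e =
  (if e \<in> Vset Sv \<sigma> then Some (case envstep \<delta> So \<xi> (q,qt,z) \<sigma> (hat_val e) of (q',qt',z') \<Rightarrow> Env q' qt' z') else None)"
  by (simp add: envstep_def Let_def)

definition Aok :: "('x \<Rightarrow> 'e \<Rightarrow> 'x option) \<Rightarrow> 'x set \<Rightarrow> 'e set \<Rightarrow> ('e list \<Rightarrow> 'e set) \<Rightarrow> ('e list \<Rightarrow> 'e option) \<Rightarrow> bool" where
  "Aok \<delta> X0 So S A = (\<forall>\<beta> \<sigma>. \<beta>@[\<sigma>] \<in> proj So ` clangU \<delta> X0 So (SA S A) \<longrightarrow> A (\<beta>@[\<sigma>]) \<in> {None} \<union> Some ` So)"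

lemma INV:
  assumes real: "realizes \<delta> X0 So S \<xi> z0" and aok: "Aok \<delta> X0 So S A"
  shows "\<beta> \<in> proj So ` clangU \<delta> X0 So (SA S A) \<Longrightarrow> run \<delta> So \<xi> X0 z0 A \<beta> = (q, qt, z) \<Longrightarrow>
    (z \<noteq> None \<longleftrightarrow> estC \<delta> X0 So S (gA A \<beta>) \<noteq> {}) \<and>
    (\<forall>zz. z = Some zz \<longrightarrow> deltas \<xi> z0 (gA A \<beta>) = Some zz \<and> DeltaH \<xi> zz = S (gA A \<beta>) \<and>
        UR \<delta> So (S (gA A \<beta>)) q = estC \<delta> X0 So S (gA A \<beta>) \<and>
        UR (aug \<delta>) So (S (gA A \<beta>)) qt = FA \<delta> X0 So (SA S A) \<beta>)"
proof (induction \<beta> arbitrary: q qt z rule: rev_induct)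
  case Nil
  then have X0ne: "X0 \<noteq> {}" by (auto simp: obs_iff)
  have eq: "q = X0" "qt = {(x, x) | x. x \<in> X0}" "z = Some z0" using Nil by auto
  have estC0: "estC \<delta> X0 So S [] = UR \<delta> So (S []) X0"
  proof -
    have "X0 = (\<Union>x0\<in>X0. {x0})" by auto
    then have "UR \<delta> So (S []) X0 = (\<Union>x0\<in>X0. UR \<delta> So (S []) {x0})" using UR_Union[of \<delta> So "S []" "\<lambda>x. {x}" X0] by simp
    then show ?thesis by (simp add: estC_Full Full_Nil)
  qed
  have "[] \<in> clangU \<delta> X0 So S" using X0ne by (auto simp: clangU_def intro: clang.intros)
  then have "DeltaH \<xi> z0 = S []" using real unfolding realizes_def by fastforce
  moreover have "UR (aug \<delta>) So (S []) qt = FA \<delta> X0 So (SA S A) []"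
    using FA_Nil[of \<delta> So "SA S A" X0] eq by (simp add: SA_apply)
  ultimately show ?case using eq estC0 X0ne by auto
next
  case (snoc \<sigma> \<beta>)
  define T where "T = SA S A"
  obtain x0 where x0: "x0 \<in> X0" "Full \<delta> So T x0 (\<beta>@[\<sigma>]) \<noteq> {}" using snoc.prems(1) by (auto simp: obs_iff T_def)
  then have Hb: "\<beta> \<in> proj So ` clangU \<delta> X0 So (SA S A)" using Full_prefix obs_iff T_def by metis
  have sSo: "\<sigma> \<in> So" and sT: "\<sigma> \<in> T \<beta>" using Full_snoc_nonempty[OF x0(2)] by auto
  obtain q1 qt1 z1 where r1: "run \<delta> So \<xi> X0 z0 A \<beta> = (q1, qt1, z1)" by (cases "run \<delta> So \<xi> X0 z0 A \<beta>") auto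
  note IH = snoc.IH[OF Hb r1]
  define a where "a = A (\<beta>@[\<sigma>])"
  have aok': "a = None \<or> (\<exists>b. a = Some b \<and> b \<in> So)" using aok snoc.prems(1) unfolding Aok_def a_def by auto
  have gAs: "gA A (\<beta>@[\<sigma>]) = gA A \<beta> @ opt_list a" by (simp add: gA_snoc a_def)
  have rs: "(q, qt, z) = envstep \<delta> So \<xi> (q1, qt1, z1) \<sigma> a" using snoc.prems(2) r1 by (simp add: run_snoc a_def)
  show ?case
  proof (cases z1)
    case None
    then have "z = None" using rs by (simp add: envstep_def Let_def)
    moreover have "estC \<delta> X0 So S (gA A (\<beta>@[\<sigma>])) = {}" using IH None gAs estC_prefix by metis
    ultimately show ?thesis by simp
  next
    case (Some zz)
    then have I: "estC \<delta> X0 So S (gA A \<beta>) \<noteq> {}" "deltas \<xi> z0 (gA A \<beta>) = Some zz" "DeltaH \<xi> zz = S (gA A \<beta>)"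
      "UR \<delta> So (S (gA A \<beta>)) q1 = estC \<delta> X0 So S (gA A \<beta>)" "UR (aug \<delta>) So (S (gA A \<beta>)) qt1 = FA \<delta> X0 So T \<beta>"
      using IH by (auto simp: T_def)
    have q1ne: "q1 \<noteq> {}" using I(1) I(4) by auto
    have qt: "qt = NX (aug \<delta>) \<sigma> (FA \<delta> X0 So T \<beta>)" using rs Some I by (simp add: envstep_def Let_def)
    have qtok: "UR (aug \<delta>) So (S (gA A (\<beta>@[\<sigma>]))) qt = FA \<delta> X0 So T (\<beta>@[\<sigma>])"
      using FA_snoc[of \<sigma> So T \<beta> \<delta> X0, OF sSo sT] qt by (simp add: T_def SA_apply)
    show ?thesis
    proof (cases a)
      case None
      have q: "q = estC \<delta> X0 So S (gA A \<beta>)" using rs Some I None by (simp add: envstep_def Let_def NXo_def)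
      have z: "z = Some zz" using rs Some I None q1ne by (simp add: envstep_def Let_def NXo_def xi_opt_def)
      have g: "gA A (\<beta>@[\<sigma>]) = gA A \<beta>" using gAs None by (simp add: opt_list_def)
      have "UR \<delta> So (S (gA A \<beta>)) (estC \<delta> X0 So S (gA A \<beta>)) = estC \<delta> X0 So S (gA A \<beta>)"
        using I(4) by (metis UR_idem)
      then show ?thesis using I q z g qtok by (simp add: T_def)
    next
      case (Some b)
      with aok' have bSo: "b \<in> So" by auto
      define \<alpha> where "\<alpha> = gA A \<beta>"
      have g: "gA A (\<beta>@[\<sigma>]) = \<alpha>@[b]" using gAs Some by (simp add: opt_list_def \<alpha>_def)
      have q: "q = NX \<delta> b (estC \<delta> X0 So S \<alpha>)" using rs \<open>z1 = Some zz\<close> I Some by (simp add: envstep_def Let_def NXo_def \<alpha>_def)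
      have z: "z = (if q \<noteq> {} then \<xi> zz b else None)" using rs \<open>z1 = Some zz\<close> I Some by (simp add: envstep_def Let_def NXo_def xi_opt_def)
      show ?thesis
      proof (cases "b \<in> S \<alpha>")
        case False
        then have "\<xi> zz b = None" using I(3) by (auto simp: DeltaH_def \<alpha>_def)
        then have "z = None" using z by simp
        moreover have "estC \<delta> X0 So S (\<alpha>@[b]) = {}" using False estC_snoc[OF bSo, of \<delta> X0 S \<alpha>] by simp
        ultimately show ?thesis using g by simp
      next
        case True
        then obtain zz' where zz': "\<xi> zz b = Some zz'" using I(3) by (auto simp: DeltaH_def \<alpha>_def)
        have e: "estC \<delta> X0 So S (\<alpha>@[b]) = UR \<delta> So (S (\<alpha>@[b])) q" using True estC_snoc[OF bSo, of \<delta> X0 S \<alpha>] q by simp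
        show ?thesis
        proof (cases "q = {}")
          case True
          then show ?thesis using z e g by simp
        next
          case False
          then have zs: "z = Some zz'" using z zz' by simp
          have d: "deltas \<xi> z0 (\<alpha>@[b]) = Some zz'" using I(2) zz' by (simp add: deltas_snoc \<alpha>_def)
          have "estC \<delta> X0 So S (\<alpha>@[b]) \<noteq> {}" using e False by simp
          then obtain y0 s x where s: "y0 \<in> X0" "s \<in> clang \<delta> So S y0" "proj So s = \<alpha>@[b]"
            by (auto simp: estC_def)
          then have "s \<in> clangU \<delta> X0 So S" by (auto simp: clangU_def)
          then obtain z'' where z'': "deltas \<xi> z0 s = Some z''" "DeltaH \<xi> z'' = S (proj So s)"
            using real unfolding realizes_def by blast
          have "deltas \<xi> z0 (proj So s) = Some z''" using realizes_proj[OF real z''(1)] .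
          then have "z'' = zz'" using d s(3) by simp
          then have "DeltaH \<xi> zz' = S (\<alpha>@[b])" using z'' s(3) by simp
          then show ?thesis using zs d e g qtok False by (simp add: T_def)
        qed
      qed
    qed
  qed
qed



lemma reach_deltas: "q \<in> reach step q0 \<longleftrightarrow> (\<exists>h. deltas step q0 h = Some q)"
proof
  assume "q \<in> reach step q0"
  then show "\<exists>h. deltas step q0 h = Some q"
  proof (induction rule: reach.induct)
    case reach_init then show ?case by (auto intro: exI[of _ "[]"])
  next
    case (reach_step q e q')
    then obtain h where "deltas step q0 h = Some q" by blast
    then show ?case using reach_step by (auto simp: deltas_snoc intro!: exI[of _ "h@[e]"])
  qed
next
  assume "\<exists>h. deltas step q0 h = Some q"
  then obtain h where "deltas step q0 h = Some q" by blast
  then show "q \<in> reach step q0"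
  proof (induction h arbitrary: q rule: rev_induct)
    case Nil then show ?case by (auto intro: reach.intros)
  next
    case (snoc e h)
    then obtain p where "deltas step q0 h = Some p" "step p e = Some q"
      by (cases "deltas step q0 h") (auto simp: deltas_snoc)
    then show ?case using snoc by (auto intro: reach.intros)
  qed
qed

lemma obs_of_append[simp]: "obs_of (h@h') = obs_of h @ obs_of h'" by (simp add: obs_of_def)
lemma obs_of_Nil[simp]: "obs_of [] = []" by (simp add: obs_of_def)

lemma Vset_not_Ob: "e \<in> Vset Sv \<sigma> \<Longrightarrow> e \<noteq> Ob a" by (auto simp: Vset_def split: if_splits)

lemma obs_of_step: "x \<in> Vset Sv \<tau> \<Longrightarrow> obs_of (h@[Ob \<sigma>, x]) = obs_of h @ [\<sigma>]"
  by (cases x) (auto simp: obs_of_def Vset_def split: if_splits)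

lemma aas_Env: "aas_step \<delta> So Sv \<xi> (Env q qt z) e = Some r \<Longrightarrow>
   \<exists>\<sigma>. e = Ob \<sigma> \<and> \<sigma> \<in> Oen (aug \<delta>) So qt (DeltaZ \<xi> z) \<and> r = Att q qt z \<sigma>"
  by (cases e) (auto split: if_splits)

lemma aas_Att: "aas_step \<delta> So Sv \<xi> (Att q qt z \<sigma>) e = Some r \<Longrightarrow>
   e \<in> Vset Sv \<sigma> \<and> r = (case envstep \<delta> So \<xi> (q,qt,z) \<sigma> (hat_val e) of (q',qt',z') \<Rightarrow> Env q' qt' z')"
  unfolding aas_step_Att by (auto split: if_splits)

lemma ms_sub: "ms_step \<delta> So Sv \<xi> Xsec s e = Some r \<Longrightarrow> aas_step \<delta> So Sv \<xi> s e = Some r"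
  by (simp add: ms_step_def split: if_splits)

lemma att_enabled: "is_att q \<Longrightarrow> \<exists>e. ms_step \<delta> So Sv \<xi> Xsec q e \<noteq> None"
proof (cases q)
  case (Att q qt z \<sigma>)
  have "(if \<sigma> \<in> Sv then HatEps else Hat \<sigma>) \<in> Vset Sv \<sigma>" by (simp add: Vset_def)
  then show ?thesis using Att by (auto simp: ms_step_def Let_def)
qed auto

locale ctx =
  fixes \<delta> :: "'x \<Rightarrow> 'e \<Rightarrow> 'x option" and X0 Xsec :: "'x set" and So Sv :: "'e set"
    and S :: "'e list \<Rightarrow> 'e set" and \<xi> :: "'z \<Rightarrow> 'e \<Rightarrow> 'z option" and z0 :: 'z
  assumes real: "realizes \<delta> X0 So S \<xi> z0" and SvSo: "Sv \<subseteq> So"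
begin

abbreviation "ms \<equiv> ms_step \<delta> So Sv \<xi> Xsec"
abbreviation "q0 \<equiv> aas_init X0 z0"

lemma SAS_sub: "is_SAS ms q0 m \<Longrightarrow> m q e = Some q' \<Longrightarrow> aas_step \<delta> So Sv \<xi> q e = Some q'"
  unfolding is_SAS_def using ms_sub by blast

lemma decomp:
  assumes sas: "is_SAS ms q0 m" and h: "deltas m q0 h = Some r" and env: "is_env r" and ne: "h \<noteq> []"
  shows "\<exists>h' \<sigma> x q qt z. h = h'@[Ob \<sigma>, x] \<and> deltas m q0 h' = Some (Env q qt z) \<and>
     m (Env q qt z) (Ob \<sigma>) = Some (Att q qt z \<sigma>) \<and> m (Att q qt z \<sigma>) x = Some r \<and>
     \<sigma> \<in> Oen (aug \<delta>) So qt (DeltaZ \<xi> z) \<and> x \<in> Vset Sv \<sigma>"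
proof -
  obtain h1 x where h1: "h = h1@[x]" using ne by (cases h rule: rev_exhaust) auto
  then obtain a where a: "deltas m q0 h1 = Some a" "m a x = Some r"
    using h by (cases "deltas m q0 h1") (auto simp: deltas_snoc)
  have aas1: "aas_step \<delta> So Sv \<xi> a x = Some r" using SAS_sub[OF sas a(2)] .
  obtain q qt z \<sigma> where aA: "a = Att q qt z \<sigma>"
  proof (cases a)
    case (Env q qt z)
    then show ?thesis using aas_Env[of \<delta> So Sv \<xi> q qt z x r] aas1 env by auto
  qed auto
  have xV: "x \<in> Vset Sv \<sigma>" using aas_Att[of \<delta> So Sv \<xi> q qt z \<sigma> x r] aas1 aA by simp
  have "h1 \<noteq> []" using a(1) aA by (auto simp: aas_init_def)
  then obtain h' y where h': "h1 = h'@[y]" by (cases h1 rule: rev_exhaust) auto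
  then obtain e' where e': "deltas m q0 h' = Some e'" "m e' y = Some a"
    using a(1) by (cases "deltas m q0 h'") (auto simp: deltas_snoc)
  have aas2: "aas_step \<delta> So Sv \<xi> e' y = Some a" using SAS_sub[OF sas e'(2)] .
  show ?thesis
  proof (cases e')
    case (Env q' qt' z')
    then obtain \<sigma>' where "y = Ob \<sigma>'" "\<sigma>' \<in> Oen (aug \<delta>) So qt' (DeltaZ \<xi> z')" "a = Att q' qt' z' \<sigma>'"
      using aas_Env aas2 by blast
    then show ?thesis using aA h1 h' e' a xV Env by auto
  next
    case (Att q' qt' z' \<sigma>')
    then show ?thesis using aas_Att[of \<delta> So Sv \<xi> q' qt' z' \<sigma>' y a] aas2 aA by (auto split: prod.splits)
  qed
qed

lemma q0_env: "is_env q0" by (simp add: aas_init_def)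

lemma uniq:
  assumes sas: "is_SAS ms q0 m"
  shows "deltas m q0 h1 = Some r1 \<Longrightarrow> is_env r1 \<Longrightarrow> deltas m q0 h2 = Some r2 \<Longrightarrow> is_env r2 \<Longrightarrow>
     obs_of h1 = obs_of h2 \<Longrightarrow> h1 = h2"
proof (induction "length h1" arbitrary: h1 h2 r1 r2 rule: less_induct)
  case less
  show ?case
  proof (cases "h1 = []")
    case True
    show ?thesis
    proof (rule ccontr)
      assume "h1 \<noteq> h2"
      then have "h2 \<noteq> []" using True by simp
      then obtain h' \<sigma> x where "h2 = h'@[Ob \<sigma>, x]" "x \<in> Vset Sv \<sigma>" using decomp[OF sas less(4,5)] by blast
      then have "obs_of h2 \<noteq> []" using obs_of_step by fastforce
      then show False using less(6) True by simp
    qed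
  next
    case False
    then have "obs_of h1 \<noteq> []" using decomp[OF sas less(2,3)] obs_of_step by fastforce
    then have "h2 \<noteq> []" using less(6) by auto
    obtain h1' \<sigma>1 x1 q1 qt1 z1 where d1: "h1 = h1'@[Ob \<sigma>1, x1]" "deltas m q0 h1' = Some (Env q1 qt1 z1)"
       "m (Env q1 qt1 z1) (Ob \<sigma>1) = Some (Att q1 qt1 z1 \<sigma>1)" "m (Att q1 qt1 z1 \<sigma>1) x1 = Some r1" "x1 \<in> Vset Sv \<sigma>1"
      using decomp[OF sas less(2,3) False] by blast
    obtain h2' \<sigma>2 x2 q2 qt2 z2 where d2: "h2 = h2'@[Ob \<sigma>2, x2]" "deltas m q0 h2' = Some (Env q2 qt2 z2)"
       "m (Env q2 qt2 z2) (Ob \<sigma>2) = Some (Att q2 qt2 z2 \<sigma>2)" "m (Att q2 qt2 z2 \<sigma>2) x2 = Some r2" "x2 \<in> Vset Sv \<sigma>2"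
      using decomp[OF sas less(4,5) \<open>h2 \<noteq> []\<close>] by blast
    have "obs_of h1' @ [\<sigma>1] = obs_of h2' @ [\<sigma>2]" using less(6) d1 d2 obs_of_step by metis
    then have o: "obs_of h1' = obs_of h2'" "\<sigma>1 = \<sigma>2" by auto
    have "h1' = h2'" using less(1)[OF _ d1(2) _ d2(2) _ o(1)] d1(1) by simp
    then have eqs: "q1 = q2" "qt1 = qt2" "z1 = z2" using d1(2) d2(2) by auto
    have "deltas m q0 (h1'@[Ob \<sigma>1]) = Some (Att q1 qt1 z1 \<sigma>1)" using d1 by (simp add: deltas_snoc)
    then have "Att q1 qt1 z1 \<sigma>1 \<in> reach m q0" using reach_deltas by metis
    then have "\<exists>!e. m (Att q1 qt1 z1 \<sigma>1) e \<noteq> None" using sas unfolding is_SAS_def by auto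
    then have "x1 = x2" using d1(4) d2(4) eqs o by auto
    then show ?thesis using d1 d2 \<open>h1' = h2'\<close> o by simp
  qed
qed

lemma induced_val:
  assumes sas: "is_SAS ms q0 m" and h: "deltas m q0 (h'@[Ob \<sigma>, x]) = Some r" "is_env r" "x \<in> Vset Sv \<sigma>"
  shows "induced m q0 (obs_of h' @ [\<sigma>]) = hat_val x"
proof -
  let ?h = "h'@[Ob \<sigma>, x]"
  have o: "obs_of ?h = obs_of h' @ [\<sigma>]" using obs_of_step[OF h(3)] .
  have ext: "?h \<in> ext_strings m q0" using h by (auto simp: ext_strings_def)
  have "(THE g. g \<in> ext_strings m q0 \<and> obs_of g = obs_of h' @ [\<sigma>]) = ?h"
  proof (rule the_equality)
    show "?h \<in> ext_strings m q0 \<and> obs_of ?h = obs_of h' @ [\<sigma>]" using ext o by simp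
  next
    fix g assume "g \<in> ext_strings m q0 \<and> obs_of g = obs_of h' @ [\<sigma>]"
    then show "g = ?h" using uniq[OF sas] h o by (auto simp: ext_strings_def)
  qed
  then show ?thesis using ext o unfolding induced_def by auto
qed

lemma induced_attacker:
  assumes sas: "is_SAS ms q0 m"
  shows "is_attacker \<delta> X0 So Sv (induced m q0)"
  unfolding is_attacker_def
proof (intro conjI allI impI)
  show "induced m q0 [] = None" by (simp add: induced_def)
next
  fix \<alpha> \<sigma>
  have main: "induced m q0 (\<alpha>@[\<sigma>]) = Some \<sigma> \<or> (\<exists>x. x \<in> Vset Sv \<sigma> \<and> induced m q0 (\<alpha>@[\<sigma>]) = hat_val x)"
  proof (cases "\<exists>h\<in>ext_strings m q0. obs_of h = \<alpha>@[\<sigma>]")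
    case False then show ?thesis by (simp add: induced_def)
  next
    case True
    then obtain h r where h: "deltas m q0 h = Some r" "is_env r" "obs_of h = \<alpha>@[\<sigma>]" by (auto simp: ext_strings_def)
    then have "h \<noteq> []" by auto
    then obtain h' \<tau> x where d: "h = h'@[Ob \<tau>, x]" "x \<in> Vset Sv \<tau>" using decomp[OF sas h(1,2)] by blast
    then have "\<tau> = \<sigma>" "obs_of h' = \<alpha>" using obs_of_step[OF d(2), of h' \<tau>] h(3) by auto
    then show ?thesis using induced_val[OF sas _ h(2) d(2)] h(1) d by auto
  qed
  {
    assume "\<sigma> \<notin> Sv"
    then show "induced m q0 (\<alpha>@[\<sigma>]) = Some \<sigma>" using main by (auto simp: Vset_def)
  }
  {
    assume "\<sigma> \<in> Sv"
    then show "induced m q0 (\<alpha>@[\<sigma>]) \<in> Some ` Sv \<union> {None}" using main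
      by (auto simp: Vset_def elim!: hat_val.elims)
  }
qed

lemma attacker_Aok: "is_attacker \<delta> X0 So Sv A \<Longrightarrow> Aok \<delta> X0 So S A"
  unfolding Aok_def is_attacker_def
proof (intro allI impI)
  fix \<beta> \<sigma>
  assume a: "A [] = None \<and> (\<forall>\<alpha> \<sigma>. \<alpha> @ [\<sigma>] \<in> proj So ` langG \<delta> X0 \<longrightarrow>
       (\<sigma> \<notin> Sv \<longrightarrow> A (\<alpha> @ [\<sigma>]) = Some \<sigma>) \<and> (\<sigma> \<in> Sv \<longrightarrow> A (\<alpha> @ [\<sigma>]) \<in> Some ` Sv \<union> {None}))"
    and b: "\<beta> @ [\<sigma>] \<in> proj So ` clangU \<delta> X0 So (SA S A)"
  then obtain x0 where x0: "x0 \<in> X0" "Full \<delta> So (SA S A) x0 (\<beta>@[\<sigma>]) \<noteq> {}" by (auto simp: obs_iff)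
  then have "\<sigma> \<in> So" using Full_snoc_nonempty by metis
  obtain s y0 where "y0 \<in> X0" "s \<in> clang \<delta> So (SA S A) y0" "\<beta> @ [\<sigma>] = proj So s"
    using b by (auto simp: clangU_def)
  then have "s \<in> langG \<delta> X0" using clang_deltas[of s \<delta> So "SA S A" y0] unfolding langG_def by blast
  then have "\<beta> @ [\<sigma>] \<in> proj So ` langG \<delta> X0" using \<open>\<beta> @ [\<sigma>] = proj So s\<close> by auto
  then have "(\<sigma> \<notin> Sv \<longrightarrow> A (\<beta> @ [\<sigma>]) = Some \<sigma>) \<and> (\<sigma> \<in> Sv \<longrightarrow> A (\<beta> @ [\<sigma>]) \<in> Some ` Sv \<union> {None})"
    using a by blast
  then show "A (\<beta> @ [\<sigma>]) \<in> {None} \<union> Some ` So" using SvSo \<open>\<sigma> \<in> So\<close> by (cases "\<sigma> \<in> Sv") auto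
qed

lemma OenH:
  assumes "UR (aug \<delta>) So (T \<beta>) qt = FA \<delta> X0 So T \<beta>"
  shows "\<sigma> \<in> Oen (aug \<delta>) So qt (T \<beta>) \<longleftrightarrow> \<beta>@[\<sigma>] \<in> proj So ` clangU \<delta> X0 So T"
proof
  assume "\<sigma> \<in> Oen (aug \<delta>) So qt (T \<beta>)"
  then obtain p where p: "\<sigma> \<in> So" "\<sigma> \<in> T \<beta>" "p \<in> FA \<delta> X0 So T \<beta>" "aug \<delta> p \<sigma> \<noteq> None"
    using assms by (auto simp: Oen_UR)
  obtain x0 x where "p = (x0,x)" by (cases p)
  then have "x0 \<in> X0" "x \<in> Full \<delta> So T x0 \<beta>" "\<delta> x \<sigma> \<noteq> None" using p by (auto simp: FA_def aug_def)
  then have "NX \<delta> \<sigma> (Full \<delta> So T x0 \<beta>) \<noteq> {}" by (auto simp: NX_def)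
  then have "Full \<delta> So T x0 (\<beta>@[\<sigma>]) \<noteq> {}" using Full_snoc[OF p(1), of \<delta> T x0 \<beta>] p(2) by simp
  then show "\<beta>@[\<sigma>] \<in> proj So ` clangU \<delta> X0 So T" using \<open>x0 \<in> X0\<close> obs_iff by blast
next
  assume "\<beta>@[\<sigma>] \<in> proj So ` clangU \<delta> X0 So T"
  then obtain x0 where x0: "x0 \<in> X0" "Full \<delta> So T x0 (\<beta>@[\<sigma>]) \<noteq> {}" by (auto simp: obs_iff)
  then have p: "\<sigma> \<in> So" "\<sigma> \<in> T \<beta>" using Full_snoc_nonempty by metis+
  then have "NX \<delta> \<sigma> (Full \<delta> So T x0 \<beta>) \<noteq> {}" using Full_snoc[OF p(1), of \<delta> T x0 \<beta>] x0(2) p(2) by (simp split: if_splits)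
  then obtain x y where "x \<in> Full \<delta> So T x0 \<beta>" "\<delta> x \<sigma> = Some y" by (auto simp: NX_def)
  then have "(x0,x) \<in> UR (aug \<delta>) So (T \<beta>) qt" "aug \<delta> (x0,x) \<sigma> \<noteq> None"
    using assms x0 by (auto simp: FA_def aug_def)
  then show "\<sigma> \<in> Oen (aug \<delta>) So qt (T \<beta>)" using p unfolding Oen_UR by blast
qed

end



lemma H_Nil: "X0 \<noteq> {} \<Longrightarrow> [] \<in> proj So ` clangU \<delta> X0 So T"
  by (auto simp: clangU_def intro: clang.intros intro!: image_eqI[of _ _ "[]"])

lemma Oen_DeltaZ_None: "\<sigma> \<in> Oen d So qt (DeltaZ \<xi> z) \<Longrightarrow> z \<noteq> None \<and> qt \<noteq> {}"
  by (cases z) (auto simp: Oen_def)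

context ctx begin

lemma RC:
  assumes sas: "is_SAS ms q0 m"
  shows "deltas m q0 h = Some (Env q qt z) \<Longrightarrow> run \<delta> So \<xi> X0 z0 (induced m q0) (obs_of h) = (q,qt,z) \<and>
     (h \<noteq> [] \<longrightarrow> obs_of h \<in> proj So ` clangU \<delta> X0 So (SA S (induced m q0)))"
proof (induction "length h" arbitrary: h q qt z rule: less_induct)
  case less
  define A where "A = induced m q0"
  have aok: "Aok \<delta> X0 So S A" using attacker_Aok induced_attacker[OF sas] A_def by blast
  show ?case
  proof (cases "h = []")
    case True
    then show ?thesis using less.prems by (auto simp: aas_init_def)
  next
    case False
    obtain h' \<sigma> x q1 qt1 z1 where d: "h = h'@[Ob \<sigma>, x]" "deltas m q0 h' = Some (Env q1 qt1 z1)"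
       "m (Env q1 qt1 z1) (Ob \<sigma>) = Some (Att q1 qt1 z1 \<sigma>)" "m (Att q1 qt1 z1 \<sigma>) x = Some (Env q qt z)"
       "\<sigma> \<in> Oen (aug \<delta>) So qt1 (DeltaZ \<xi> z1)" "x \<in> Vset Sv \<sigma>"
      using decomp[OF sas less.prems _ False] by auto
    have IH: "run \<delta> So \<xi> X0 z0 A (obs_of h') = (q1,qt1,z1)"
      "h' \<noteq> [] \<longrightarrow> obs_of h' \<in> proj So ` clangU \<delta> X0 So (SA S A)"
      using less(1)[OF _ d(2)] d(1) A_def by auto
    obtain zz where zz: "z1 = Some zz" and qt1ne: "qt1 \<noteq> {}" using Oen_DeltaZ_None[OF d(5)] by auto
    have H': "obs_of h' \<in> proj So ` clangU \<delta> X0 So (SA S A)"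
    proof (cases "h' = []")
      case True
      then have "qt1 = {(x, x) | x. x \<in> X0}" using d(2) by (auto simp: aas_init_def)
      then have "X0 \<noteq> {}" using qt1ne by auto
      then show ?thesis using True H_Nil[OF \<open>X0 \<noteq> {}\<close>] by simp
    qed (use IH in auto)
    note I = INV[OF real aok H' IH(1)]
    have DZ: "DeltaZ \<xi> z1 = SA S A (obs_of h')" using I zz by (simp add: SA_apply)
    have UR1: "UR (aug \<delta>) So (SA S A (obs_of h')) qt1 = FA \<delta> X0 So (SA S A) (obs_of h')"
      using I zz by (simp add: SA_apply)
    have Hn: "obs_of h' @ [\<sigma>] \<in> proj So ` clangU \<delta> X0 So (SA S A)"
      using OenH[OF UR1] d(5) DZ by simp
    have o: "obs_of h = obs_of h' @ [\<sigma>]" using obs_of_step[OF d(6)] d(1) by simp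
    have iv: "A (obs_of h' @ [\<sigma>]) = hat_val x"
      using induced_val[OF sas, of h' \<sigma> x "Env q qt z"] less.prems d(1,6) A_def by simp
    have "envstep \<delta> So \<xi> (q1,qt1,z1) \<sigma> (hat_val x) = (q,qt,z)"
      using aas_Att[OF SAS_sub[OF sas d(4)]] by (auto split: prod.splits)
    then show ?thesis using o iv IH(1) Hn A_def by (simp add: run_snoc)
  qed
qed

lemma L1:
  assumes sas: "is_SAS ms q0 m" and t: "Env q qt (Some zz) \<in> reach m q0"
    and oen: "\<sigma> \<in> Oen (aug \<delta>) So qt (DeltaH \<xi> zz)"
    and sec: "Iof (NX (aug \<delta>) \<sigma> (UR (aug \<delta>) So (DeltaH \<xi> zz) qt)) \<subseteq> Xsec"
  shows "IS_detectable \<delta> X0 So S Xsec (induced m q0)"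
proof -
  define A where "A = induced m q0"
  have aok: "Aok \<delta> X0 So S A" using attacker_Aok induced_attacker[OF sas] A_def by blast
  obtain h where h: "deltas m q0 h = Some (Env q qt (Some zz))" using t reach_deltas by metis
  note R = RC[OF sas h]
  have oen': "\<sigma> \<in> Oen (aug \<delta>) So qt (DeltaZ \<xi> (Some zz))" using oen by simp
  have H: "obs_of h \<in> proj So ` clangU \<delta> X0 So (SA S A)"
  proof (cases "h = []")
    case True
    then have "qt = {(x, x) | x. x \<in> X0}" using h by (auto simp: aas_init_def)
    then have "X0 \<noteq> {}" using Oen_DeltaZ_None[OF oen'] by auto
    then show ?thesis using True H_Nil[OF \<open>X0 \<noteq> {}\<close>] by simp
  qed (use R A_def in auto)
  have Rr: "run \<delta> So \<xi> X0 z0 A (obs_of h) = (q, qt, Some zz)" using R A_def by simp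
  note I = INV[OF real aok H Rr]
  let ?\<beta> = "obs_of h"
  have st: "stealthy_along \<delta> X0 So S A ?\<beta>" using I by (simp add: stealthy_along_def)
  have DZ: "DeltaH \<xi> zz = SA S A ?\<beta>" using I by (simp add: SA_apply)
  have UR1: "UR (aug \<delta>) So (SA S A ?\<beta>) qt = FA \<delta> X0 So (SA S A) ?\<beta>"
    using I by (simp add: SA_apply)
  have Hn: "?\<beta> @ [\<sigma>] \<in> proj So ` clangU \<delta> X0 So (SA S A)"
    using OenH[OF UR1] oen DZ by simp
  have sSo: "\<sigma> \<in> So" and sT: "\<sigma> \<in> SA S A ?\<beta>" using oen DZ by (auto simp: Oen_UR)
  have "estI \<delta> X0 So (SA S A) (?\<beta> @ [\<sigma>]) = Iof (FA \<delta> X0 So (SA S A) (?\<beta> @ [\<sigma>]))" by (simp add: Iof_FA)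
  also have "\<dots> = Iof (NX (aug \<delta>) \<sigma> (UR (aug \<delta>) So (DeltaH \<xi> zz) qt))"
    using FA_snoc[of \<sigma> So "SA S A" ?\<beta> \<delta> X0, OF sSo sT] UR1 DZ by (metis Iof_UR_aug)
  finally have "estI \<delta> X0 So (SA S A) (?\<beta> @ [\<sigma>]) \<subseteq> Xsec" using sec by simp
  then show ?thesis unfolding IS_detectable_def using sSo Hn st A_def by blast
qed

end

lemma SAS_exists:
  assumes att: "\<And>q. is_att q \<Longrightarrow> \<exists>e. step q e \<noteq> None" and t: "t \<in> reach step q0"
  shows "\<exists>m. is_SAS step q0 m \<and> t \<in> reach m q0"
proof -
  define canr where "canr q = (\<exists>h. deltas step q h = Some t)" for q
  define dist where "dist q = (LEAST n. \<exists>h. length h = n \<and> deltas step q h = Some t)" for q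
  have progress: "\<exists>e q'. step q e = Some q' \<and> canr q' \<and> dist q' < dist q" if "canr q" "q \<noteq> t" for q
  proof -
    have "\<exists>n h. length h = n \<and> deltas step q h = Some t" using that(1) canr_def by auto
    then have "\<exists>h. length h = dist q \<and> deltas step q h = Some t"
      unfolding dist_def by (rule LeastI_ex)
    then obtain h where h: "length h = dist q" "deltas step q h = Some t" by blast
    then have "h \<noteq> []" using that(2) by auto
    then obtain e h' where "h = e#h'" by (cases h) auto
    then obtain q' where q': "step q e = Some q'" "deltas step q' h' = Some t" using h(2)
      by (cases "step q e") auto
    then have "dist q' \<le> length h'" unfolding dist_def by (metis (mono_tags, lifting) Least_le)
    then show ?thesis using q' h(1) \<open>h = e#h'\<close> unfolding canr_def by (intro exI[of _ e] exI[of _ q']) auto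
  qed
  define good where "good q e = (step q e \<noteq> None \<and> (canr q \<and> q \<noteq> t \<longrightarrow> (\<exists>q'. step q e = Some q' \<and> canr q' \<and> dist q' < dist q)))" for q e
  have goodex: "is_att q \<Longrightarrow> \<exists>e. good q e" for q
  proof -
    assume "is_att q"
    show ?thesis
    proof (cases "canr q \<and> q \<noteq> t")
      case True then show ?thesis using progress unfolding good_def by fastforce
    next
      case False then show ?thesis using att[OF \<open>is_att q\<close>] unfolding good_def by auto
    qed
  qed
  define m where "m q e = (if q \<in> reach step q0 then (if is_att q then (if e = (SOME e. good q e) then step q e else None) else step q e) else None)" for q e
  have m1: "m q e = Some q' \<Longrightarrow> q \<in> reach step q0 \<and> step q e = Some q'" for q e q'
    by (auto simp: m_def split: if_splits)
  have rsub: "q \<in> reach m q0 \<Longrightarrow> q \<in> reach step q0" for q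
    by (induction rule: reach.induct) (auto intro: reach.intros dest: m1)
  have sas: "is_SAS step q0 m"
    unfolding is_SAS_def
  proof (intro conjI)
    show "\<forall>q e q'. m q e = Some q' \<longrightarrow> q \<in> reach step q0 \<and> step q e = Some q'" using m1 by blast
  next
    show "\<forall>q\<in>reach m q0. is_att q \<longrightarrow> (\<exists>!e. m q e \<noteq> None)"
    proof (intro ballI impI)
    fix q assume "q \<in> reach m q0" "is_att q"
    then have r: "q \<in> reach step q0" using rsub by blast
    have g: "good q (SOME e. good q e)" using goodex[OF \<open>is_att q\<close>] by (rule someI_ex)
    show "\<exists>!e. m q e \<noteq> None"
    proof
      have "step q (SOME e. good q e) \<noteq> None" using g unfolding good_def by blast
      then show "m q (SOME e. good q e) \<noteq> None" using r \<open>is_att q\<close> by (simp add: m_def)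
    next
      fix e assume "m q e \<noteq> None"
      then show "e = (SOME e. good q e)" using \<open>is_att q\<close> by (auto simp: m_def split: if_splits)
    qed
    qed
  next
    show "\<forall>q\<in>reach m q0. is_env q \<longrightarrow> (\<forall>e. step q e \<noteq> None \<longrightarrow> m q e = step q e)"
    proof (intro ballI impI allI)
      fix q e assume "q \<in> reach m q0" "is_env q" "step q e \<noteq> None"
      moreover have "\<not> is_att q" using \<open>is_env q\<close> by (cases q) auto
      ultimately show "m q e = step q e" using rsub by (auto simp: m_def)
    qed
  qed
  have main: "\<And>q. dist q = n \<Longrightarrow> q \<in> reach m q0 \<Longrightarrow> canr q \<Longrightarrow> t \<in> reach m q0" for n
  proof (induction n rule: less_induct)
    case (less n)
    fix q assume dq: "dist q = n" and qr: "q \<in> reach m q0" and cq: "canr q"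
    show "t \<in> reach m q0"
    proof (cases "q = t")
      case True then show ?thesis using qr by simp
    next
      case False
      have qrs: "q \<in> reach step q0" using rsub qr by blast
      obtain e q' where e: "m q e = Some q'" "canr q'" "dist q' < dist q"
      proof (cases "is_att q")
        case True
        have g: "good q (SOME e. good q e)" using goodex[OF True] by (rule someI_ex)
        then obtain q' where "step q (SOME e. good q e) = Some q'" "canr q'" "dist q' < dist q"
          using cq False unfolding good_def by blast
        moreover then have "m q (SOME e. good q e) = Some q'" using qrs True by (simp add: m_def)
        ultimately show ?thesis using that by blast
      next
        case False
        obtain e q' where "step q e = Some q'" "canr q'" "dist q' < dist q" using progress cq \<open>q \<noteq> t\<close> by blast
        moreover then have "m q e = Some q'" using qrs False by (simp add: m_def)
        ultimately show ?thesis using that by blast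
      qed
      then have "q' \<in> reach m q0" using qr by (auto intro: reach.intros)
      then show ?thesis using less.IH[of "dist q'" q'] e dq by blast
    qed
  qed
  have "canr q0" using t reach_deltas canr_def by metis
  then have "t \<in> reach m q0" using main[of q0 "dist q0"] by (auto intro: reach.intros)
  then show ?thesis using sas by blast
qed



fun hatof :: "'e option \<Rightarrow> 'e mevent" where
  "hatof None = HatEps"
| "hatof (Some b) = Hat b"

lemma hat_val_hatof[simp]: "hat_val (hatof a) = a" by (cases a) auto

lemma take_split_le: assumes "i \<le> j" shows "\<exists>r. take j w = take i w @ r"
proof -
  have "take j w = take i (take j w) @ drop i (take j w)" by (rule append_take_drop_id[symmetric])
  moreover have "take i (take j w) = take i w" using assms by (simp add: min_def)
  ultimately show ?thesis by metis
qed

context ctx begin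

lemma forward:
  assumes att: "is_attacker \<delta> X0 So Sv A" and det: "IS_detectable \<delta> X0 So S Xsec A"
  shows "\<exists>m. is_SAS ms q0 m \<and> IS_detectable \<delta> X0 So S Xsec (induced m q0)"
proof -
  define T where "T = SA S A"
  obtain \<alpha> \<sigma> where \<sigma>So: "\<sigma> \<in> So" and Hw: "\<alpha>@[\<sigma>] \<in> proj So ` clangU \<delta> X0 So T"
    and stl: "estC \<delta> X0 So S (gA A \<alpha>) \<noteq> {}" and sec: "estI \<delta> X0 So T (\<alpha>@[\<sigma>]) \<subseteq> Xsec"
    using det unfolding IS_detectable_def stealthy_along_def T_def by blast
  define w where "w = \<alpha>@[\<sigma>]"
  define N where "N = length \<alpha>"
  have lw: "length w = Suc N" by (simp add: w_def N_def)
  have aok: "Aok \<delta> X0 So S A" using attacker_Aok[OF att] .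
  have Hi: "take i w \<in> proj So ` clangU \<delta> X0 So T" for i
  proof -
    obtain x0 where "x0 \<in> X0" "Full \<delta> So T x0 w \<noteq> {}" using Hw by (auto simp: obs_iff w_def)
    moreover have "w = take i w @ drop i w" by simp
    ultimately have "Full \<delta> So T x0 (take i w @ drop i w) \<noteq> {}" by simp
    then have "Full \<delta> So T x0 (take i w) \<noteq> {}" by (rule Full_prefix)
    then show ?thesis using obs_iff \<open>x0 \<in> X0\<close> by blast
  qed
  define st where "st i = run \<delta> So \<xi> X0 z0 A (take i w)" for i
  define Q where "Q i = fst (st i)" for i
  define QT where "QT i = fst (snd (st i))" for i
  define Z where "Z i = snd (snd (st i))" for i
  define E where "E i = (Env (Q i) (QT i) (Z i) :: ('x, 'z, 'e) mstate)" for i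
  have st_eq: "st i = (Q i, QT i, Z i)" for i by (simp add: Q_def QT_def Z_def)
  have stealth: "estC \<delta> X0 So S (gA A (take i w)) \<noteq> {}" if iN: "i \<le> N" for i
  proof -
    have ti: "take i w = take i \<alpha>" using iN by (simp add: w_def N_def)
    obtain r where "gA A \<alpha> = gA A (take i \<alpha>) @ r" using gA_prefix[of A "take i \<alpha>" "drop i \<alpha>"] by auto
    then have "estC \<delta> X0 So S (gA A (take i \<alpha>) @ r) \<noteq> {}" using stl by simp
    then have "estC \<delta> X0 So S (gA A (take i \<alpha>)) \<noteq> {}" by (rule estC_prefix)
    then show ?thesis using ti by simp
  qed
  have inv: "\<exists>zz. Z i = Some zz \<and> DeltaH \<xi> zz = T (take i w) \<and> UR (aug \<delta>) So (T (take i w)) (QT i) = FA \<delta> X0 So T (take i w)"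
    if iN: "i \<le> N" for i
  proof -
    note I = INV[OF real aok Hi[of i, unfolded T_def] st_def[of i, symmetric, unfolded st_eq]]
    then show ?thesis using stealth[OF that] by (auto simp: T_def SA_apply)
  qed
  have tk: "take (Suc i) w = take i w @ [w!i]" if iN: "i \<le> N" for i
    using iN lw by (simp add: take_Suc_conv_app_nth)
  have wi: "w!i \<in> So \<and> w!i \<in> T (take i w)" if iN: "i \<le> N" for i
  proof -
    obtain x0 where "x0 \<in> X0" "Full \<delta> So T x0 (take i w @ [w!i]) \<noteq> {}" using Hi[of "Suc i"] tk[OF iN] by (auto simp: obs_iff)
    then show ?thesis using Full_snoc_nonempty[of \<delta> So T x0 "take i w" "w!i"] by blast
  qed
  have stSuc: "st (Suc i) = envstep \<delta> So \<xi> (st i) (w!i) (A (take (Suc i) w))" if iN: "i \<le> N" for i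
    using tk[OF iN] by (simp add: st_def run_snoc)
  have QTSuc: "QT (Suc i) = NX (aug \<delta>) (w!i) (UR (aug \<delta>) So (DeltaH \<xi> zz) (QT i))" if iN: "i \<le> N" and zi: "Z i = Some zz" for i zz
    using stSuc[OF iN] zi st_eq[of i] QT_def[of "Suc i"] by (simp add: envstep_def Let_def)
  have estI0: "estI \<delta> X0 So T [] = X0"
  proof -
    have "x0 \<in> Full \<delta> So T x0 []" for x0 using UR_incl[of "{x0}" \<delta> So "T []"] by (auto simp: Full_Nil)
    then show ?thesis by (auto simp: estI_Full)
  qed
  have IofQT: "Iof (QT i) = estI \<delta> X0 So T (take i w)" if "i \<le> Suc N" for i
  proof (cases i)
    case 0
    then show ?thesis using estI0 by (simp add: QT_def st_def Iof_def image_def)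
  next
    case (Suc j)
    then have j: "j \<le> N" using that by simp
    obtain zz where zz: "Z j = Some zz" "DeltaH \<xi> zz = T (take j w)" "UR (aug \<delta>) So (T (take j w)) (QT j) = FA \<delta> X0 So T (take j w)"
      using inv[OF j] by blast
    have QTi: "QT i = NX (aug \<delta>) (w!j) (FA \<delta> X0 So T (take j w))" using QTSuc[OF j zz(1)] zz Suc by simp
    then have "Iof (QT i) = Iof (UR (aug \<delta>) So (T (take j w @ [w!j])) (QT i))" by simp
    also have "\<dots> = Iof (FA \<delta> X0 So T (take j w @ [w!j]))"
      using FA_snoc[of "w!j" So T "take j w" \<delta> X0] wi[OF j] QTi by simp
    finally show ?thesis using Iof_FA tk[OF j] Suc by simp
  qed
  have oen: "w!i \<in> Oen (aug \<delta>) So (QT i) (DeltaH \<xi> zz)" if iN: "i \<le> N" and zi: "Z i = Some zz" for i zz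
  proof -
    obtain zz' where "Z i = Some zz'" "DeltaH \<xi> zz' = T (take i w)" "UR (aug \<delta>) So (T (take i w)) (QT i) = FA \<delta> X0 So T (take i w)"
      using inv[OF iN] by blast
    then show ?thesis using OenH[of T "take i w" "QT i" "w!i"] Hi[of "Suc i"] tk[OF iN] zi by simp
  qed
  have hatok: "hatof (A (take (Suc i) w)) \<in> Vset Sv (w!i)" if iN: "i \<le> N" for i
  proof -
    obtain s y0 where "y0 \<in> X0" "s \<in> clang \<delta> So T y0" "take i w @ [w!i] = proj So s"
      using Hi[of "Suc i"] tk[OF iN] by (auto simp: clangU_def)
    then have "take i w @ [w!i] \<in> proj So ` langG \<delta> X0"
      using clang_deltas[of s \<delta> So T y0] unfolding langG_def by blast
    then have "(w!i \<notin> Sv \<longrightarrow> A (take i w @ [w!i]) = Some (w!i)) \<and> (w!i \<in> Sv \<longrightarrow> A (take i w @ [w!i]) \<in> Some ` Sv \<union> {None})"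
      using att unfolding is_attacker_def by blast
    then show ?thesis using tk[OF iN] by (cases "w!i \<in> Sv") (auto simp: Vset_def)
  qed
  have trans: "aas_step \<delta> So Sv \<xi> (E i) (Ob (w!i)) = Some (Att (Q i) (QT i) (Z i) (w!i)) \<and>
      aas_step \<delta> So Sv \<xi> (Att (Q i) (QT i) (Z i) (w!i)) (hatof (A (take (Suc i) w))) = Some (E (Suc i))"
    if iN: "i \<le> N" for i
  proof
    obtain zz where zz: "Z i = Some zz" using inv[OF iN] by blast
    show "aas_step \<delta> So Sv \<xi> (E i) (Ob (w!i)) = Some (Att (Q i) (QT i) (Z i) (w!i))"
      using oen[OF iN zz] zz by (simp add: E_def)
    show "aas_step \<delta> So Sv \<xi> (Att (Q i) (QT i) (Z i) (w!i)) (hatof (A (take (Suc i) w))) = Some (E (Suc i))"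
    proof -
      have es: "envstep \<delta> So \<xi> (Q i, QT i, Z i) (w!i) (A (take (Suc i) w)) = (Q (Suc i), QT (Suc i), Z (Suc i))"
        using stSuc[OF iN] st_eq[of i] st_eq[of "Suc i"] by simp
      show ?thesis unfolding aas_step_Att E_def using hatok[OF iN] es by simp
    qed
  qed
  define stop where "stop i = (Qdet Xsec (E i) \<or> Qud \<delta> So \<xi> Xsec (E i))" for i
  have wN: "take (Suc N) w = w" using lw by simp
  have stopN: "stop (Suc N)" using IofQT[of "Suc N"] wN sec by (simp add: stop_def E_def w_def)
  define k where "k = (LEAST i. stop i)"
  have kle: "k \<le> Suc N" using stopN unfolding k_def by (rule Least_le)
  have stopk: "stop k" using stopN unfolding k_def by (rule LeastI)
  have nstop: "\<not> stop i" if "i < k" for i using that unfolding k_def by (rule not_less_Least)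
  have mono: "estI \<delta> X0 So T (take j w) \<subseteq> estI \<delta> X0 So T (take i w)" if ij: "i \<le> j" for i j
  proof -
    obtain r where "take j w = take i w @ r" using take_split_le[OF ij, of w] by blast
    then show ?thesis using estI_mono[of \<delta> X0 So T "take i w" r] by simp
  qed
  obtain x0 where x0: "x0 \<in> estI \<delta> X0 So T w" using Hw by (auto simp: obs_iff estI_Full w_def)
  have wsub: "estI \<delta> X0 So T w \<subseteq> Iof (QT k)" using mono[OF kle] IofQT[OF kle] wN by simp
  have secK: "Iof (QT k) \<subseteq> Xsec"
  proof (rule ccontr)
    assume nsec: "\<not> Iof (QT k) \<subseteq> Xsec"
    show False
    proof (cases "Qdet Xsec (E k)")
      case True
      then have "Iof (QT k) \<inter> Xsec = {}" using nsec by (simp add: E_def)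
      then show False using x0 wsub sec w_def by auto
    next
      case False
      then have qud: "Qud \<delta> So \<xi> Xsec (E k)" using stopk unfolding stop_def by blast
      have kN: "k \<le> N"
      proof (rule ccontr)
        assume "\<not> k \<le> N"
        then have "k = Suc N" using kle by simp
        then show False using nsec IofQT[of "Suc N"] wN sec w_def by simp
      qed
      obtain zz where zz: "Z k = Some zz" "DeltaH \<xi> zz = T (take k w)" "UR (aug \<delta>) So (T (take k w)) (QT k) = FA \<delta> X0 So T (take k w)"
        using inv[OF kN] by blast
      have qud': "\<forall>(y0, x)\<in>FA \<delta> X0 So T (take k w). y0 \<in> Xsec \<longrightarrow> (\<exists>y0'. (y0', x) \<in> FA \<delta> X0 So T (take k w) \<and> y0' \<notin> Xsec)"
        using qud zz by (simp add: E_def)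
      obtain s where s: "x0 \<in> X0" "s \<in> clang \<delta> So T x0" "proj So s = w" using x0 by (auto simp: estI_def)
      have x0sec: "x0 \<in> Xsec" using x0 sec w_def by auto
      have "proj So s = take k w @ drop k w" using s by simp
      then obtain s1 s2 where s12: "s = s1@s2" "proj So s1 = take k w" "proj So s2 = drop k w" using proj_split by blast
      have s1c: "s1 \<in> clang \<delta> So T x0" using s(2) s12(1) clang_prefix[of s1 s2] by simp
      then obtain x where x: "deltas \<delta> x0 s1 = Some x" using clang_deltas_Some[OF s1c] by blast
      have "(x0, x) \<in> FA \<delta> X0 So T (take k w)" using s(1) s1c s12(2) x by (auto simp: FA_def Full_def)
      then obtain y0' where y0': "(y0', x) \<in> FA \<delta> X0 So T (take k w)" "y0' \<notin> Xsec" using qud' x0sec by blast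
      then obtain s1' where s1': "y0' \<in> X0" "s1' \<in> clang \<delta> So T y0'" "proj So s1' = take k w" "deltas \<delta> y0' s1' = Some x"
        by (auto simp: FA_def Full_def)
      have "s1' @ s2 \<in> clang \<delta> So T y0'"
        using clang_transfer[OF s1c s1'(2) x s1'(4)] s12 s1'(3) s(2) by simp
      moreover have "proj So (s1' @ s2) = w" using s1'(3) s12(3) by simp
      ultimately have "y0' \<in> estI \<delta> X0 So T w" using s1'(1) unfolding estI_def by blast
      then show False using y0'(2) sec w_def by auto
    qed
  qed
  define j where "j = k - 1"
  have jN: "j \<le> N" using kle by (simp add: j_def)
  have secJ: "Iof (QT (Suc j)) \<subseteq> Xsec"
  proof -
    have "k \<le> Suc j" by (simp add: j_def)
    then have "estI \<delta> X0 So T (take (Suc j) w) \<subseteq> estI \<delta> X0 So T (take k w)" by (rule mono)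
    then show ?thesis using IofQT[of "Suc j"] IofQT[OF kle] jN secK by simp
  qed
  have reachE: "E i \<in> reach ms q0" if "i \<le> j" for i
    using that
  proof (induction i)
    case 0
    have "E 0 = q0" by (simp add: E_def Q_def QT_def Z_def st_def aas_init_def)
    then show ?case by (simp add: reach.reach_init)
  next
    case (Suc i)
    then have iN: "i \<le> N" and ik: "i < k" using jN by (auto simp: j_def)
    have "\<not> stop i" using nstop[OF ik] .
    then have m1: "ms (E i) (Ob (w!i)) = Some (Att (Q i) (QT i) (Z i) (w!i))"
      using trans[OF iN] by (simp add: ms_step_def stop_def)
    have m2: "ms (Att (Q i) (QT i) (Z i) (w!i)) (hatof (A (take (Suc i) w))) = Some (E (Suc i))"
      using trans[OF iN] by (simp add: ms_step_def)
    have "E i \<in> reach ms q0" using Suc by simp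
    then show ?case using m1 m2 by (meson reach.reach_step)
  qed
  obtain m where m: "is_SAS ms q0 m" "E j \<in> reach m q0"
    using SAS_exists[of ms "E j" q0, OF att_enabled reachE[OF order_refl]] by blast
  obtain zz where zz: "Z j = Some zz" using inv[OF jN] by blast
  have "IS_detectable \<delta> X0 So S Xsec (induced m q0)"
  proof (rule L1[OF m(1)])
    show "Env (Q j) (QT j) (Some zz) \<in> reach m q0" using m(2) zz by (simp add: E_def)
    show "w!j \<in> Oen (aug \<delta>) So (QT j) (DeltaH \<xi> zz)" using oen[OF jN zz] .
    show "Iof (NX (aug \<delta>) (w!j) (UR (aug \<delta>) So (DeltaH \<xi> zz) (QT j))) \<subseteq> Xsec"
      using secJ QTSuc[OF jN zz] by simp
  qed
  then show ?thesis using m(1) by blast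
qed

end

theorem theorem2:
  fixes \<delta> :: "'x::finite \<Rightarrow> 'e::finite \<Rightarrow> 'x option"
    and X0 Xsec :: "'x set"
    and So Suc_ev Sv :: "'e set"
    and S :: "'e list \<Rightarrow> 'e set"
    and \<xi> :: "'z::finite \<Rightarrow> 'e \<Rightarrow> 'z option"
    and z0 :: 'z
  assumes "is_supervisor \<delta> X0 So Suc_ev S"
    and "realizes \<delta> X0 So S \<xi> z0"
    and "Xsec \<subseteq> X0"
    and "Sv \<subseteq> So"
  shows "IS_attackable \<delta> X0 So Sv S Xsec \<longleftrightarrow>
         (\<exists>m. is_SAS (ms_step \<delta> So Sv \<xi> Xsec) (aas_init X0 z0) m \<and>
              IS_detectable \<delta> X0 So S Xsec (induced m (aas_init X0 z0)))"
proof -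
  interpret ctx \<delta> X0 Xsec So Sv S \<xi> z0 using assms(2,4) by unfold_locales
  show ?thesis
  proof
    assume "IS_attackable \<delta> X0 So Sv S Xsec"
    then obtain A where "is_attacker \<delta> X0 So Sv A" "IS_detectable \<delta> X0 So S Xsec A"
      unfolding IS_attackable_def by blast
    then show "\<exists>m. is_SAS ms q0 m \<and> IS_detectable \<delta> X0 So S Xsec (induced m q0)" by (rule forward)
  next
    assume "\<exists>m. is_SAS ms q0 m \<and> IS_detectable \<delta> X0 So S Xsec (induced m q0)"
    then obtain m where "is_SAS ms q0 m" "IS_detectable \<delta> X0 So S Xsec (induced m q0)" by blast
    then show "IS_attackable \<delta> X0 So Sv S Xsec"
      unfolding IS_attackable_def using induced_attacker by blast
  qed
qed


end
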